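(* Let $\Gamma$ be a finitely generated, residually finite group, let $(\Gamma_i)_{i\in\mathbb N^*}$ be a nested sequence of finite index normal subgroups of $\Gamma$ with trivial intersection, and let $1\le p\le\infty$. If the box space $\Box_{\{\Gamma_i\}}\Gamma$ admits a coarse embedding into some $L^p$ space, then $\Gamma$ has property $PL^p$.
   Context: An $L^p$ space means $L^p(\Omega,\mu)$ for some measure space. A map $f:X\to B$ from a metric space $(X,d)$ to a Banach space is a coarse embedding if there are non-decreasing $\rho_1,\rho_2:[0,\infty)\to(-\infty,\infty)$ with $\rho_i(r)\to+\infty$ as $r\to\infty$ and $\rho_1(d(x,y))\le\|f(x)-f(y)\|\le\rho_2(d(x,y))$ for all $x,y\in X$. $\Gamma$ has property $PL^p$ if there is an isometric affine action $\alpha(g)v=\pi(g)v+b(g)$ of $\Gamma$ on some $L^p$ space ($\pi$ an isometric linear representation, $b$ a 1-cocycle: $b(gh)=\pi(g)b(h)+b(g)$) with $\|b(g)\|\to\infty$ as $g\to\infty$. Box space: fix a finite generating set of $\Gamma$; $\Box_{\{\Gamma_i\}}\Gamma$ is the disjoint union of the finite groups $\Gamma/\Gamma_i$, each with the word metric induced by the image of the generating set, with distances between identity elements of successive quotients larger than the maximum of their diameters (distances between distinct pieces tending to infinity). *)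

theory Defs
  imports "HOL-Probability.Probability" "HOL-Algebra.Coset" "HOL-Algebra.Generated_Groups"
begin

text \<open>Elements of L^p(M) are represented by measurable real functions; two
functions represent the same element iff they agree M-almost everywhere.\<close>

definition Lp_norm :: "'a measure \<Rightarrow> ennreal \<Rightarrow> ('a \<Rightarrow> real) \<Rightarrow> real" where
  "Lp_norm M p f =
     (if p = \<infinity> then real_of_ereal (esssup M (\<lambda>x. ereal \<bar>f x\<bar>))
      else (\<integral>x. \<bar>f x\<bar> powr (enn2real p) \<partial>M) powr (1 / enn2real p))"

definition Lp_space :: "'a measure \<Rightarrow> ennreal \<Rightarrow> ('a \<Rightarrow> real) set" where
  "Lp_space M p =
     {f \<in> borel_measurable M.
        (if p = \<infinity> then esssup M (\<lambda>x. ereal \<bar>f x\<bar>) < \<infinity>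
         else integrable M (\<lambda>x. \<bar>f x\<bar> powr (enn2real p)))}"

definition ae_eq :: "'a measure \<Rightarrow> ('a \<Rightarrow> real) \<Rightarrow> ('a \<Rightarrow> real) \<Rightarrow> bool" where
  "ae_eq M f g \<longleftrightarrow> (AE x in M. f x = g x)"

definition coarse_embedding_Lp ::
  "'x set \<Rightarrow> ('x \<Rightarrow> 'x \<Rightarrow> real) \<Rightarrow> 'a measure \<Rightarrow> ennreal \<Rightarrow> ('x \<Rightarrow> 'a \<Rightarrow> real) \<Rightarrow> bool" where
  "coarse_embedding_Lp X d M p f \<longleftrightarrow>
     (\<forall>x\<in>X. f x \<in> Lp_space M p) \<and>
     (\<exists>rho1 rho2 :: real \<Rightarrow> real.
        mono_on (atLeast 0) rho1 \<and> mono_on (atLeast 0) rho2 \<and>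
        filterlim rho1 at_top at_top \<and> filterlim rho2 at_top at_top \<and>
        (\<forall>x\<in>X. \<forall>y\<in>X. rho1 (d x y) \<le> Lp_norm M p (\<lambda>w. f x w - f y w) \<and>
                       Lp_norm M p (\<lambda>w. f x w - f y w) \<le> rho2 (d x y)))"

definition word_dist :: "('g, 'm) monoid_scheme \<Rightarrow> 'g set \<Rightarrow> 'g \<Rightarrow> 'g \<Rightarrow> nat" where
  "word_dist H S x y =
     (LEAST n. \<exists>ws. set ws \<subseteq> S \<union> (\<lambda>s. inv\<^bsub>H\<^esub> s) ` S \<and> length ws = n \<and>
                    y = x \<otimes>\<^bsub>H\<^esub> foldr (\<lambda>s t. s \<otimes>\<^bsub>H\<^esub> t) ws \<one>\<^bsub>H\<^esub>)"

definition piece_dist :: "('g, 'm) monoid_scheme \<Rightarrow> 'g set \<Rightarrow> (nat \<Rightarrow> 'g set) \<Rightarrow> nat \<Rightarrow> 'g set \<Rightarrow> 'g set \<Rightarrow> real" where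
  "piece_dist G S N i x y =
     real (word_dist (G Mod N i) ((\<lambda>s. N i #>\<^bsub>G\<^esub> s) ` S) x y)"

definition piece_diam :: "('g, 'm) monoid_scheme \<Rightarrow> 'g set \<Rightarrow> (nat \<Rightarrow> 'g set) \<Rightarrow> nat \<Rightarrow> real" where
  "piece_diam G S N i =
     Max {piece_dist G S N i x y | x y. x \<in> rcosets\<^bsub>G\<^esub> N i \<and> y \<in> rcosets\<^bsub>G\<^esub> N i}"

definition box_space :: "('g, 'm) monoid_scheme \<Rightarrow> (nat \<Rightarrow> 'g set) \<Rightarrow> (nat \<times> 'g set) set" where
  "box_space G N = {(i, x). x \<in> rcosets\<^bsub>G\<^esub> N i}"

text \<open>Box space metric: word metric inside each piece; points of distinct
pieces i, j are at distance diam_i + diam_j + i + j + 2, so the distance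
between pieces exceeds their diameters and tends to infinity.\<close>

definition box_dist :: "('g, 'm) monoid_scheme \<Rightarrow> 'g set \<Rightarrow> (nat \<Rightarrow> 'g set) \<Rightarrow>
    nat \<times> 'g set \<Rightarrow> nat \<times> 'g set \<Rightarrow> real" where
  "box_dist G S N a b =
     (if fst a = fst b then piece_dist G S N (fst a) (snd a) (snd b)
      else piece_diam G S N (fst a) + piece_diam G S N (fst b)
           + real (fst a) + real (fst b) + 2)"

definition finite_index :: "('g, 'm) monoid_scheme \<Rightarrow> 'g set \<Rightarrow> bool" where
  "finite_index G H \<longleftrightarrow> finite (rcosets\<^bsub>G\<^esub> H)"

definition residually_finite :: "('g, 'm) monoid_scheme \<Rightarrow> bool" where
  "residually_finite G \<longleftrightarrow>
     (\<forall>g\<in>carrier G. g \<noteq> \<one>\<^bsub>G\<^esub> \<longrightarrow>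
        (\<exists>H. H \<lhd> G \<and> finite_index G H \<and> g \<notin> H))"

text \<open>An isometric affine action g . v = pi g v + b g of G on L^p(M):
pi is an isometric linear representation (well defined on a.e.-classes),
b a 1-cocycle, and the cocycle is proper (norm of b g tends to infinity
as g leaves finite subsets of G).\<close>

definition proper_affine_Lp_action ::
  "('g, 'm) monoid_scheme \<Rightarrow> 'a measure \<Rightarrow> ennreal \<Rightarrow>
   ('g \<Rightarrow> ('a \<Rightarrow> real) \<Rightarrow> ('a \<Rightarrow> real)) \<Rightarrow> ('g \<Rightarrow> 'a \<Rightarrow> real) \<Rightarrow> bool" where
  "proper_affine_Lp_action G M p \<pi> b \<longleftrightarrow>
     (\<forall>g\<in>carrier G. \<forall>f\<in>Lp_space M p. \<pi> g f \<in> Lp_space M p) \<and>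
     (\<forall>g\<in>carrier G. \<forall>f\<in>Lp_space M p. \<forall>h\<in>Lp_space M p.
        ae_eq M f h \<longrightarrow> ae_eq M (\<pi> g f) (\<pi> g h)) \<and>
     (\<forall>g\<in>carrier G. \<forall>f\<in>Lp_space M p. \<forall>h\<in>Lp_space M p. \<forall>c::real.
        ae_eq M (\<pi> g (\<lambda>x. f x + c * h x)) (\<lambda>x. \<pi> g f x + c * \<pi> g h x)) \<and>
     (\<forall>g\<in>carrier G. \<forall>f\<in>Lp_space M p. Lp_norm M p (\<pi> g f) = Lp_norm M p f) \<and>
     (\<forall>f\<in>Lp_space M p. ae_eq M (\<pi> \<one>\<^bsub>G\<^esub> f) f) \<and>
     (\<forall>g\<in>carrier G. \<forall>h\<in>carrier G. \<forall>f\<in>Lp_space M p.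
        ae_eq M (\<pi> (g \<otimes>\<^bsub>G\<^esub> h) f) (\<pi> g (\<pi> h f))) \<and>
     (\<forall>g\<in>carrier G. b g \<in> Lp_space M p) \<and>
     (\<forall>g\<in>carrier G. \<forall>h\<in>carrier G.
        ae_eq M (b (g \<otimes>\<^bsub>G\<^esub> h)) (\<lambda>x. \<pi> g (b h) x + b g x)) \<and>
     (\<forall>R::real. finite {g \<in> carrier G. Lp_norm M p (b g) \<le> R})"

end

theory Submission
  imports Defs
begin



lemma nn_integral_prod_count_space:
  fixes M :: "'b measure"
  assumes "F \<in> borel_measurable (count_space (UNIV::'i set) \<Otimes>\<^sub>M M)"
  shows "(\<integral>\<^sup>+y. F y \<partial>(count_space UNIV \<Otimes>\<^sub>M M)) = (\<integral>\<^sup>+x. \<integral>\<^sup>+\<omega>. F (x,\<omega>) \<partial>M \<partial>count_space UNIV)"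
  using assms
proof (induction rule: borel_measurable_induct)
  case (cong f g)
  have "(\<integral>\<^sup>+y. f y \<partial>(count_space UNIV \<Otimes>\<^sub>M M)) = (\<integral>\<^sup>+y. g y \<partial>(count_space UNIV \<Otimes>\<^sub>M M))"
    by (rule nn_integral_cong) (use cong in auto)
  also have "\<dots> = (\<integral>\<^sup>+x. \<integral>\<^sup>+\<omega>. g (x,\<omega>) \<partial>M \<partial>count_space UNIV)" by fact
  also have "\<dots> = (\<integral>\<^sup>+x. \<integral>\<^sup>+\<omega>. f (x,\<omega>) \<partial>M \<partial>count_space UNIV)"
    by (intro nn_integral_cong) (use cong in \<open>auto simp: space_pair_measure\<close>)
  finally show ?case .
next
  case (set A)
  then show ?case by (simp add: emeasure_prod_count_space)
next
  case (mult u c)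
  have m: "\<And>x. (\<lambda>\<omega>. u (x,\<omega>)) \<in> borel_measurable M" using mult(2) by (rule measurable_Pair2) simp
  show ?case using mult by (simp add: nn_integral_cmult m)
next
  case (add u v)
  have m: "\<And>x. (\<lambda>\<omega>. u (x,\<omega>)) \<in> borel_measurable M" "\<And>x. (\<lambda>\<omega>. v (x,\<omega>)) \<in> borel_measurable M"
    using add by (auto intro: measurable_Pair2)
  show ?case using add by (simp add: nn_integral_add m)
next
  case (seq U)
  have m: "\<And>i x. (\<lambda>\<omega>. U i (x,\<omega>)) \<in> borel_measurable M" using seq(1) by (auto intro: measurable_Pair2)
  have inc: "\<And>x. incseq (\<lambda>i \<omega>. U i (x,\<omega>))" using \<open>incseq U\<close> by (auto simp: incseq_def le_fun_def)
  have "(\<integral>\<^sup>+y. (SUP i. U i) y \<partial>(count_space UNIV \<Otimes>\<^sub>M M)) = (SUP i. \<integral>\<^sup>+y. U i y \<partial>(count_space UNIV \<Otimes>\<^sub>M M))"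
    unfolding SUP_apply by (rule nn_integral_monotone_convergence_SUP[OF \<open>incseq U\<close>]) (use seq in auto)
  also have "\<dots> = (SUP i. \<integral>\<^sup>+x. \<integral>\<^sup>+\<omega>. U i (x,\<omega>) \<partial>M \<partial>count_space UNIV)" using seq by simp
  also have "\<dots> = (\<integral>\<^sup>+x. (SUP i. \<integral>\<^sup>+\<omega>. U i (x,\<omega>) \<partial>M) \<partial>count_space UNIV)"
    by (rule nn_integral_monotone_convergence_SUP[symmetric])
       (use inc m in \<open>auto simp: incseq_def le_fun_def intro!: nn_integral_mono\<close>)
  also have "\<dots> = (\<integral>\<^sup>+x. \<integral>\<^sup>+\<omega>. (SUP i. U i) (x,\<omega>) \<partial>M \<partial>count_space UNIV)"
    unfolding SUP_apply
    by (intro nn_integral_cong nn_integral_monotone_convergence_SUP[symmetric] inc m)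
  finally show ?case .
qed

definition wmeas :: "'b measure \<Rightarrow> ('i \<Rightarrow> real) \<Rightarrow> ('i \<times> 'b) measure" where
  "wmeas M w = density (count_space UNIV \<Otimes>\<^sub>M M) (\<lambda>y. ennreal (w (fst y)))"

lemma sets_wmeas[simp]: "sets (wmeas M w) = sets (count_space UNIV \<Otimes>\<^sub>M M)"
  by (simp add: wmeas_def)

lemma space_wmeas[simp]: "space (wmeas M w) = UNIV \<times> space M"
  by (simp add: wmeas_def space_pair_measure)

lemma measurable_wmeas_iff[simp]: "measurable (wmeas M w) N = measurable (count_space UNIV \<Otimes>\<^sub>M M) N"
  by (rule measurable_cong_sets) simp_all

lemma measurable_wmeas_iff2[simp]: "measurable N (wmeas M w) = measurable N (count_space UNIV \<Otimes>\<^sub>M M)"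
  by (rule measurable_cong_sets) simp_all

lemma measurable_w_fst[measurable]: "(\<lambda>y. ennreal (w (fst y))) \<in> borel_measurable (count_space UNIV \<Otimes>\<^sub>M M)"
proof -
  have "(\<lambda>y. w (fst y)) \<in> borel_measurable (count_space UNIV \<Otimes>\<^sub>M M)"
    by (rule measurable_compose[OF measurable_fst]) simp
  then show ?thesis by simp
qed

lemma nn_integral_wmeas:
  fixes M :: "'b measure" and w :: "'i \<Rightarrow> real"
  assumes "F \<in> borel_measurable (count_space UNIV \<Otimes>\<^sub>M M)"
  shows "(\<integral>\<^sup>+y. F y \<partial>wmeas M w) = (\<integral>\<^sup>+x. ennreal (w x) * \<integral>\<^sup>+\<omega>. F (x,\<omega>) \<partial>M \<partial>count_space UNIV)"
proof -
  have m: "(\<lambda>y. ennreal (w (fst y))) \<in> borel_measurable (count_space UNIV \<Otimes>\<^sub>M M)" by (rule measurable_w_fst)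
  have m2: "\<And>x. (\<lambda>\<omega>. F (x,\<omega>)) \<in> borel_measurable M" using assms by (rule measurable_Pair2) simp
  have "(\<integral>\<^sup>+y. F y \<partial>wmeas M w) = (\<integral>\<^sup>+y. ennreal (w (fst y)) * F y \<partial>(count_space UNIV \<Otimes>\<^sub>M M))"
    unfolding wmeas_def by (rule nn_integral_density[OF m assms])
  also have "\<dots> = (\<integral>\<^sup>+x. \<integral>\<^sup>+\<omega>. ennreal (w x) * F (x,\<omega>) \<partial>M \<partial>count_space UNIV)"
    by (subst nn_integral_prod_count_space) (use m assms in auto)
  also have "\<dots> = (\<integral>\<^sup>+x. ennreal (w x) * \<integral>\<^sup>+\<omega>. F (x,\<omega>) \<partial>M \<partial>count_space UNIV)"
    by (intro nn_integral_cong nn_integral_cmult m2)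
  finally show ?thesis .
qed

lemma AE_wmeas_D:
  fixes M :: "'b measure" and w :: "'i \<Rightarrow> real"
  assumes "AE y in wmeas M w. P y" and "w x > 0"
  shows "AE \<omega> in M. P (x,\<omega>)"
proof -
  have m: "(\<lambda>y. ennreal (w (fst y))) \<in> borel_measurable (count_space UNIV \<Otimes>\<^sub>M M)" by (rule measurable_w_fst)
  have "AE y in count_space UNIV \<Otimes>\<^sub>M M. 0 < ennreal (w (fst y)) \<longrightarrow> P y"
    using assms(1) unfolding wmeas_def by (subst (asm) AE_density[OF m])
  then obtain N where N: "{y \<in> space (count_space UNIV \<Otimes>\<^sub>M M). \<not> (0 < ennreal (w (fst y)) \<longrightarrow> P y)} \<subseteq> N"
    "N \<in> sets (count_space UNIV \<Otimes>\<^sub>M M)" "emeasure (count_space UNIV \<Otimes>\<^sub>M M) N = 0"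
    by (auto elim!: AE_E)
  have mi: "\<And>x. (\<lambda>\<omega>. indicator N (x,\<omega>) :: ennreal) \<in> borel_measurable M"
    using N(2) by (intro measurable_Pair2[of _ "count_space UNIV"]) auto
  have "(\<integral>\<^sup>+x. \<integral>\<^sup>+\<omega>. indicator N (x,\<omega>) \<partial>M \<partial>count_space UNIV) = 0"
    using N(3) by (simp add: emeasure_prod_count_space[OF N(2)])
  then have "AE x in count_space UNIV. (\<integral>\<^sup>+\<omega>. indicator N (x,\<omega>) \<partial>M) = 0"
    by (subst (asm) nn_integral_0_iff_AE) auto
  then have "(\<integral>\<^sup>+\<omega>. indicator N (x,\<omega>) \<partial>M) = 0" by (simp add: AE_count_space)
  then have "AE \<omega> in M. indicator N (x,\<omega>) = (0::ennreal)"
    by (subst (asm) nn_integral_0_iff_AE[OF mi])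
  then show ?thesis
  proof (rule AE_mp, intro AE_I2 impI)
    fix \<omega> assume "\<omega> \<in> space M" "indicator N (x,\<omega>) = (0::ennreal)"
    then have "(x,\<omega>) \<notin> N" by (auto simp: indicator_def split: if_splits)
    then show "P (x,\<omega>)" using N(1) assms(2) \<open>\<omega> \<in> space M\<close> by (auto simp: space_pair_measure subset_iff)
  qed
qed

lemma AE_wmeas_I:
  fixes M :: "'b measure" and w :: "'i \<Rightarrow> real"
  assumes "{y \<in> space (count_space UNIV \<Otimes>\<^sub>M M). \<not> P y} \<in> sets (count_space UNIV \<Otimes>\<^sub>M M)"
    and "\<And>x. w x > 0 \<Longrightarrow> AE \<omega> in M. P (x,\<omega>)"
  shows "AE y in wmeas M w. P y"
proof -
  let ?N = "{y \<in> space (count_space UNIV \<Otimes>\<^sub>M M). \<not> P y}"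
  have mi: "indicator ?N \<in> borel_measurable (count_space UNIV \<Otimes>\<^sub>M M)" using assms(1) by simp
  have "emeasure (wmeas M w) ?N = (\<integral>\<^sup>+y. indicator ?N y \<partial>wmeas M w)"
    using assms(1) by simp
  also have "\<dots> = (\<integral>\<^sup>+x. ennreal (w x) * \<integral>\<^sup>+\<omega>. indicator ?N (x,\<omega>) \<partial>M \<partial>count_space UNIV)"
    by (rule nn_integral_wmeas[OF mi])
  also have "\<dots> = (\<integral>\<^sup>+x. 0 \<partial>count_space (UNIV::'i set))"
  proof (rule nn_integral_cong)
    fix x
    show "ennreal (w x) * (\<integral>\<^sup>+\<omega>. indicator ?N (x,\<omega>) \<partial>M) = 0"
    proof (cases "w x > 0")
      case True
      have "(\<integral>\<^sup>+\<omega>. indicator ?N (x,\<omega>) \<partial>M) = (\<integral>\<^sup>+\<omega>. 0 \<partial>M)"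
        using assms(2)[OF True]
        by (intro nn_integral_cong_AE) (auto elim!: AE_mp simp: space_pair_measure indicator_def)
      then show ?thesis by simp
    next
      case False then show ?thesis by (simp add: ennreal_eq_0_iff)
    qed
  qed
  finally have "emeasure (wmeas M w) ?N = 0" by simp
  then show ?thesis
    by (intro AE_I'[of ?N]) (use assms(1) in \<open>auto simp: space_pair_measure\<close>)
qed

lemma esssup_distr:
  fixes g :: "'b \<Rightarrow> ereal"
  assumes e: "e \<in> measurable M N" and g: "g \<in> borel_measurable N"
  shows "esssup (distr M N e) g = esssup M (\<lambda>x. g (e x))"
proof -
  have g': "g \<in> borel_measurable (distr M N e)" using g by simp
  have ge: "(\<lambda>x. g (e x)) \<in> borel_measurable M" using g e by (rule measurable_compose[rotated])
  have "{z. AE x in distr M N e. g x \<le> z} = {z. AE x in M. g (e x) \<le> z}"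
  proof (intro Collect_cong AE_distr_iff[OF e])
    fix z show "{x \<in> space N. g x \<le> z} \<in> sets N" using g by measurable
  qed
  then show ?thesis by (simp add: esssup_eq_AE[OF g'] esssup_eq_AE[OF ge])
qed

lemma Lp_distr:
  assumes e: "e \<in> measurable M N" and F: "F \<in> borel_measurable N"
  shows "Lp_norm (distr M N e) p F = Lp_norm M p (\<lambda>x. F (e x))"
    and "F \<in> Lp_space (distr M N e) p \<longleftrightarrow> (\<lambda>x. F (e x)) \<in> Lp_space M p"
proof -
  have Fe: "(\<lambda>x. F (e x)) \<in> borel_measurable M" using F e by (rule measurable_compose[rotated])
  have a: "(\<lambda>x. ereal \<bar>F x\<bar>) \<in> borel_measurable N" using F by measurable
  have b: "(\<lambda>x. \<bar>F x\<bar> powr r) \<in> borel_measurable N" for r using F by measurable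
  show "Lp_norm (distr M N e) p F = Lp_norm M p (\<lambda>x. F (e x))"
    unfolding Lp_norm_def by (simp add: esssup_distr[OF e a] integral_distr[OF e b])
  show "F \<in> Lp_space (distr M N e) p \<longleftrightarrow> (\<lambda>x. F (e x)) \<in> Lp_space M p"
    unfolding Lp_space_def using F Fe
    by (simp add: esssup_distr[OF e a] integrable_distr_eq[OF e b])
qed

lemma ae_eq_distr:
  assumes e: "e \<in> measurable M N" and F: "F \<in> borel_measurable N" and H: "H \<in> borel_measurable N"
  shows "ae_eq (distr M N e) F H \<longleftrightarrow> ae_eq M (\<lambda>x. F (e x)) (\<lambda>x. H (e x))"
  unfolding ae_eq_def by (rule AE_distr_iff[OF e]) (use F H in measurable)

lemma wmeas_preserving:
  fixes M :: "'b measure" and w :: "'i \<Rightarrow> real"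
  assumes bij: "bij \<tau>" and ww: "\<And>x. w (\<tau> x) = w x"
  shows "distr (wmeas M w) (wmeas M w) (map_prod \<tau> id) = wmeas M w"
proof (rule measure_eqI)
  have Tm: "map_prod \<tau> id \<in> measurable (count_space UNIV \<Otimes>\<^sub>M M) (count_space UNIV \<Otimes>\<^sub>M M)"
  proof -
    have m1: "(\<lambda>y. (\<tau> (fst y), snd y)) \<in> measurable (count_space UNIV \<Otimes>\<^sub>M M) (count_space UNIV \<Otimes>\<^sub>M M)"
      by (intro measurable_Pair measurable_compose[OF measurable_fst]) auto
    have eq: "map_prod \<tau> id = (\<lambda>y. (\<tau> (fst y), snd y))" by (auto simp: map_prod_def)
    show ?thesis by (simp only: eq m1)
  qed
  then have Tm': "map_prod \<tau> id \<in> measurable (wmeas M w) (wmeas M w)" by simp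
  show "sets (distr (wmeas M w) (wmeas M w) (map_prod \<tau> id)) = sets (wmeas M w)" by simp
  fix A assume A: "A \<in> sets (distr (wmeas M w) (wmeas M w) (map_prod \<tau> id))"
  then have A': "A \<in> sets (count_space UNIV \<Otimes>\<^sub>M M)" by simp
  have iA: "indicator A \<in> borel_measurable (count_space UNIV \<Otimes>\<^sub>M M)" using A' by simp
  have iAT: "(\<lambda>y. indicator A (map_prod \<tau> id y)) \<in> borel_measurable (count_space UNIV \<Otimes>\<^sub>M M)"
    using iA Tm by (rule measurable_compose[rotated])
  have "emeasure (distr (wmeas M w) (wmeas M w) (map_prod \<tau> id)) A
      = (\<integral>\<^sup>+y. indicator A y \<partial>distr (wmeas M w) (wmeas M w) (map_prod \<tau> id))"
    using A by simp
  also have "\<dots> = (\<integral>\<^sup>+y. indicator A (map_prod \<tau> id y) \<partial>wmeas M w)"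
    by (rule nn_integral_distr[OF Tm']) (use iA in simp)
  also have "\<dots> = (\<integral>\<^sup>+x. ennreal (w x) * \<integral>\<^sup>+\<omega>. indicator A (\<tau> x, \<omega>) \<partial>M \<partial>count_space UNIV)"
    by (subst nn_integral_wmeas[OF iAT]) simp
  also have "\<dots> = (\<integral>\<^sup>+x. ennreal (w (\<tau> x)) * \<integral>\<^sup>+\<omega>. indicator A (\<tau> x, \<omega>) \<partial>M \<partial>count_space UNIV)"
    by (simp add: ww)
  also have "\<dots> = (\<integral>\<^sup>+x. ennreal (w x) * \<integral>\<^sup>+\<omega>. indicator A (x, \<omega>) \<partial>M \<partial>count_space UNIV)"
    by (rule nn_integral_bij_count_space[where f="\<lambda>x. ennreal (w x) * \<integral>\<^sup>+\<omega>. indicator A (x, \<omega>) \<partial>M"])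
       (use bij in simp)
  also have "\<dots> = (\<integral>\<^sup>+y. indicator A y \<partial>wmeas M w)"
    by (rule nn_integral_wmeas[OF iA, symmetric])
  also have "\<dots> = emeasure (wmeas M w) A" using A' by simp
  finally show "emeasure (distr (wmeas M w) (wmeas M w) (map_prod \<tau> id)) A = emeasure (wmeas M w) A" .
qed

lemma embed_Lp:
  assumes inj: "inj e" and F: "F \<in> borel_measurable (embed_measure M e)"
  shows "Lp_norm (embed_measure M e) p F = Lp_norm M p (\<lambda>x. F (e x))"
    and "F \<in> Lp_space (embed_measure M e) p \<longleftrightarrow> (\<lambda>x. F (e x)) \<in> Lp_space M p"
proof -
  have eq: "embed_measure M e = distr M (embed_measure M e) e" by (rule embed_measure_eq_distr[OF inj])
  have me: "e \<in> measurable M (embed_measure M e)" by (rule measurable_embed_measure2[OF inj])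
  show "Lp_norm (embed_measure M e) p F = Lp_norm M p (\<lambda>x. F (e x))"
    using Lp_distr(1)[OF me F, of p] unfolding eq[symmetric] .
  show "F \<in> Lp_space (embed_measure M e) p \<longleftrightarrow> (\<lambda>x. F (e x)) \<in> Lp_space M p"
    using Lp_distr(2)[OF me F, of p] unfolding eq[symmetric] .
qed

lemma Lp_space_meas: "F \<in> Lp_space M p \<Longrightarrow> F \<in> borel_measurable M"
  by (simp add: Lp_space_def)

lemma embed_back_meas:
  assumes inj: "inj e" and H: "H \<in> borel_measurable M"
  shows "(\<lambda>y. H (inv_into UNIV e y)) \<in> borel_measurable (embed_measure M e)"
  by (rule measurable_embed_measure1) (use inj H in \<open>simp add: inv_into_f_f\<close>)

lemma action_transfer:
  assumes act: "proper_affine_Lp_action G M p \<pi> b" and inj: "inj e"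
  shows "proper_affine_Lp_action G (embed_measure M e) p
           (\<lambda>g F y. \<pi> g (\<lambda>x. F (e x)) (inv_into UNIV e y)) (\<lambda>g y. b g (inv_into UNIV e y))"
proof -
  let ?M' = "embed_measure M e"
  have ie[simp]: "\<And>x. inv_into UNIV e (e x) = x" using inj by (simp add: inv_into_f_f)
  have back_Lp: "(\<lambda>y. H (inv_into UNIV e y)) \<in> Lp_space ?M' p \<and> Lp_norm ?M' p (\<lambda>y. H (inv_into UNIV e y)) = Lp_norm M p H"
    if H: "H \<in> Lp_space M p" for H
  proof -
    have m: "(\<lambda>y. H (inv_into UNIV e y)) \<in> borel_measurable ?M'" by (rule embed_back_meas[OF inj Lp_space_meas[OF H]])
    show ?thesis using embed_Lp[OF inj m, of p] H by simp
  qed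
  have fwd_Lp: "(\<lambda>x. F (e x)) \<in> Lp_space M p \<and> Lp_norm ?M' p F = Lp_norm M p (\<lambda>x. F (e x))"
    if F: "F \<in> Lp_space ?M' p" for F
    using embed_Lp[OF inj Lp_space_meas[OF F], of p] F by simp
  have aeq: "ae_eq ?M' F H \<longleftrightarrow> ae_eq M (\<lambda>x. F (e x)) (\<lambda>x. H (e x))" for F H
    unfolding ae_eq_def by (rule AE_embed_measure[OF inj])
  note A = act[unfolded proper_affine_Lp_action_def]
  show ?thesis
    unfolding proper_affine_Lp_action_def
  proof (intro conjI ballI allI impI)
    fix g f assume g: "g \<in> carrier G" and f: "f \<in> Lp_space ?M' p"
    have fe: "(\<lambda>x. f (e x)) \<in> Lp_space M p" using fwd_Lp[OF f] by simp
    then have H: "\<pi> g (\<lambda>x. f (e x)) \<in> Lp_space M p" using A g by blast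
    show "(\<lambda>y. \<pi> g (\<lambda>x. f (e x)) (inv_into UNIV e y)) \<in> Lp_space ?M' p" using back_Lp[OF H] by simp
    show "Lp_norm ?M' p (\<lambda>y. \<pi> g (\<lambda>x. f (e x)) (inv_into UNIV e y)) = Lp_norm ?M' p f"
      using back_Lp[OF H] fwd_Lp[OF f] A g fe by simp
  next
    fix g f h assume g: "g \<in> carrier G" and f: "f \<in> Lp_space ?M' p" and h: "h \<in> Lp_space ?M' p"
      and fh: "ae_eq ?M' f h"
    have "ae_eq M (\<pi> g (\<lambda>x. f (e x))) (\<pi> g (\<lambda>x. h (e x)))"
      using A g fwd_Lp[OF f] fwd_Lp[OF h] fh[unfolded aeq] by blast
    then show "ae_eq ?M' (\<lambda>y. \<pi> g (\<lambda>x. f (e x)) (inv_into UNIV e y)) (\<lambda>y. \<pi> g (\<lambda>x. h (e x)) (inv_into UNIV e y))"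
      unfolding aeq by simp
  next
    fix g f h c assume g: "g \<in> carrier G" and f: "f \<in> Lp_space ?M' p" and h: "h \<in> Lp_space ?M' p"
    have L: "\<forall>g\<in>carrier G. \<forall>f\<in>Lp_space M p. \<forall>h\<in>Lp_space M p. \<forall>c::real.
        ae_eq M (\<pi> g (\<lambda>x. f x + c * h x)) (\<lambda>x. \<pi> g f x + c * \<pi> g h x)" using A by blast
    have fe: "(\<lambda>x. f (e x)) \<in> Lp_space M p" and he: "(\<lambda>x. h (e x)) \<in> Lp_space M p"
      using fwd_Lp[OF f] fwd_Lp[OF h] by auto
    have "ae_eq M (\<pi> g (\<lambda>x. f (e x) + c * h (e x))) (\<lambda>x. \<pi> g (\<lambda>x. f (e x)) x + c * \<pi> g (\<lambda>x. h (e x)) x)"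
      using L[rule_format, OF g fe he] .
    then show "ae_eq ?M' (\<lambda>y. \<pi> g (\<lambda>x. f (e x) + c * h (e x)) (inv_into UNIV e y))
        (\<lambda>x. \<pi> g (\<lambda>x. f (e x)) (inv_into UNIV e x) + c * \<pi> g (\<lambda>x. h (e x)) (inv_into UNIV e x))"
      unfolding aeq by simp
  next
    fix f assume f: "f \<in> Lp_space ?M' p"
    have "ae_eq M (\<pi> \<one>\<^bsub>G\<^esub> (\<lambda>x. f (e x))) (\<lambda>x. f (e x))" using A fwd_Lp[OF f] by blast
    then show "ae_eq ?M' (\<lambda>y. \<pi> \<one>\<^bsub>G\<^esub> (\<lambda>x. f (e x)) (inv_into UNIV e y)) f" unfolding aeq by simp
  next
    fix g h f assume g: "g \<in> carrier G" and h: "h \<in> carrier G" and f: "f \<in> Lp_space ?M' p"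
    have "ae_eq M (\<pi> (g \<otimes>\<^bsub>G\<^esub> h) (\<lambda>x. f (e x))) (\<pi> g (\<pi> h (\<lambda>x. f (e x))))"
      using A g h fwd_Lp[OF f] by blast
    then show "ae_eq ?M' (\<lambda>y. \<pi> (g \<otimes>\<^bsub>G\<^esub> h) (\<lambda>x. f (e x)) (inv_into UNIV e y))
        (\<lambda>y. \<pi> g (\<lambda>x. \<pi> h (\<lambda>x. f (e x)) (inv_into UNIV e (e x))) (inv_into UNIV e y))"
      unfolding aeq by simp
  next
    fix g assume g: "g \<in> carrier G"
    show "(\<lambda>y. b g (inv_into UNIV e y)) \<in> Lp_space ?M' p" using back_Lp A g by blast
  next
    fix g h assume g: "g \<in> carrier G" and h: "h \<in> carrier G"
    have "ae_eq M (b (g \<otimes>\<^bsub>G\<^esub> h)) (\<lambda>x. \<pi> g (b h) x + b g x)" using A g h by blast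
    then show "ae_eq ?M' (\<lambda>y. b (g \<otimes>\<^bsub>G\<^esub> h) (inv_into UNIV e y))
        (\<lambda>x. \<pi> g (\<lambda>x. b h (inv_into UNIV e (e x))) (inv_into UNIV e x) + b g (inv_into UNIV e x))"
      unfolding aeq by simp
  next
    fix R :: real
    have "{g \<in> carrier G. Lp_norm ?M' p (\<lambda>y. b g (inv_into UNIV e y)) \<le> R} = {g \<in> carrier G. Lp_norm M p (b g) \<le> R}"
      using back_Lp A by auto
    then show "finite {g \<in> carrier G. Lp_norm ?M' p (\<lambda>y. b g (inv_into UNIV e y)) \<le> R}" using A by simp
  qed
qed




definition wprod :: "('g,'m) monoid_scheme \<Rightarrow> 'g list \<Rightarrow> 'g" where
  "wprod G ws = foldr (\<lambda>s t. s \<otimes>\<^bsub>G\<^esub> t) ws \<one>\<^bsub>G\<^esub>"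

definition lenw :: "('g,'m) monoid_scheme \<Rightarrow> 'g set \<Rightarrow> 'g \<Rightarrow> nat" where
  "lenw G S g = word_dist G S \<one>\<^bsub>G\<^esub> g"

lemma wprod_simps[simp]: "wprod G [] = \<one>\<^bsub>G\<^esub>" "wprod G (s # ws) = s \<otimes>\<^bsub>G\<^esub> wprod G ws"
  by (simp_all add: wprod_def)

lemma map_lift:
  assumes "set qs \<subseteq> f ` A"
  shows "\<exists>ws. qs = map f ws \<and> set ws \<subseteq> A"
  using assms
proof (induction qs)
  case Nil then show ?case by simp
next
  case (Cons q qs)
  then obtain ws where "qs = map f ws" "set ws \<subseteq> A" by auto
  moreover from Cons.prems obtain a where "a \<in> A" "q = f a" by auto
  ultimately show ?case by (intro exI[of _ "a # ws"]) auto
qed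

context group
begin

abbreviation "Aset S \<equiv> S \<union> (\<lambda>s. inv s) ` S"

lemma wprod_closed: "S \<subseteq> carrier G \<Longrightarrow> set ws \<subseteq> Aset S \<Longrightarrow> wprod G ws \<in> carrier G"
  by (induction ws) auto

lemma wprod_append: "S \<subseteq> carrier G \<Longrightarrow> set ws \<subseteq> Aset S \<Longrightarrow> set vs \<subseteq> Aset S \<Longrightarrow>
    wprod G (ws @ vs) = wprod G ws \<otimes> wprod G vs"
proof (induction ws)
  case Nil then show ?case using wprod_closed by simp
next
  case (Cons a ws)
  then have "a \<in> carrier G" by auto
  with Cons show ?case by (simp add: m_assoc wprod_closed)
qed

lemma word_exists:
  assumes S: "S \<subseteq> carrier G" and gen: "generate G S = carrier G" and g: "g \<in> carrier G"
  shows "\<exists>ws. set ws \<subseteq> Aset S \<and> g = wprod G ws"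
proof -
  have "g \<in> generate G S" using g gen by simp
  then show ?thesis
  proof (induction rule: generate.induct)
    case one then show ?case by (intro exI[of _ "[]"]) simp
  next
    case (incl h) then show ?case using S by (intro exI[of _ "[h]"]) auto
  next
    case (inv h) then show ?case using S by (intro exI[of _ "[inv h]"]) auto
  next
    case (eng h1 h2)
    then obtain ws vs where "set ws \<subseteq> Aset S" "h1 = wprod G ws" "set vs \<subseteq> Aset S" "h2 = wprod G vs"
      by blast
    then show ?case using S by (intro exI[of _ "ws @ vs"]) (auto simp: wprod_append)
  qed
qed

lemma lenw_word:
  assumes S: "S \<subseteq> carrier G" and gen: "generate G S = carrier G" and g: "g \<in> carrier G"
  shows "\<exists>ws. set ws \<subseteq> Aset S \<and> length ws = lenw G S g \<and> g = wprod G ws"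
proof -
  let ?P = "\<lambda>n. \<exists>ws. set ws \<subseteq> Aset S \<and> length ws = n \<and> g = \<one> \<otimes> foldr (\<lambda>s t. s \<otimes> t) ws \<one>"
  obtain ws where ws: "set ws \<subseteq> Aset S" "g = wprod G ws" using word_exists[OF S gen g] by blast
  then have "?P (length ws)" using S by (auto simp: wprod_def[symmetric] wprod_closed)
  then have "?P (LEAST n. ?P n)" by (rule LeastI)
  then show ?thesis using S unfolding lenw_def word_dist_def by (auto simp: wprod_def[symmetric] wprod_closed)
qed

lemma lenw_le:
  assumes S: "S \<subseteq> carrier G" and ws: "set ws \<subseteq> Aset S"
  shows "lenw G S (wprod G ws) \<le> length ws"
  unfolding lenw_def word_dist_def
  by (rule Least_le) (use S ws in \<open>auto simp: wprod_def[symmetric] wprod_closed\<close>)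

lemma lenw_ball_finite:
  assumes S: "S \<subseteq> carrier G" "finite S" and gen: "generate G S = carrier G"
  shows "finite {g \<in> carrier G. lenw G S g \<le> L}"
proof -
  have "{g \<in> carrier G. lenw G S g \<le> L} \<subseteq> wprod G ` {ws. set ws \<subseteq> Aset S \<and> length ws \<le> L}"
  proof
    fix g assume "g \<in> {g \<in> carrier G. lenw G S g \<le> L}"
    then obtain ws where "set ws \<subseteq> Aset S" "length ws = lenw G S g" "g = wprod G ws" "lenw G S g \<le> L"
      using lenw_word[OF S(1) gen] by blast
    then show "g \<in> wprod G ` {ws. set ws \<subseteq> Aset S \<and> length ws \<le> L}" by auto
  qed
  moreover have "finite {ws. set ws \<subseteq> Aset S \<and> length ws \<le> L}"
    by (rule finite_lists_length_le) (use S in auto)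
  ultimately show ?thesis by (meson finite_imageI finite_subset)
qed

end

context normal
begin

lemma Q_foldr:
  assumes S: "S \<subseteq> carrier G" and ws: "set ws \<subseteq> Aset S"
  shows "foldr (\<lambda>s t. s \<otimes>\<^bsub>G Mod H\<^esub> t) (map (\<lambda>s. H #> s) ws) \<one>\<^bsub>G Mod H\<^esub> = H #> wprod G ws"
  using ws
proof (induction ws)
  case Nil then show ?case by (simp add: coset_mult_one subset)
next
  case (Cons a ws)
  then have a: "a \<in> carrier G" using S by auto
  have "wprod G ws \<in> carrier G" using Cons S wprod_closed by auto
  with Cons a show ?case by (simp add: rcos_sum)
qed

lemma Q_inv:
  assumes s: "s \<in> carrier G"
  shows "inv\<^bsub>G Mod H\<^esub> (H #> s) = H #> inv s"
proof -
  have "H #> s \<in> carrier (G Mod H)" using s by (simp add: FactGroup_def rcosetsI subset)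
  then show ?thesis using s by (simp add: inv_FactGroup rcos_inv)
qed

lemma Q_gens:
  assumes S: "S \<subseteq> carrier G"
  shows "(\<lambda>s. H #> s) ` S \<union> (\<lambda>s. inv\<^bsub>G Mod H\<^esub> s) ` ((\<lambda>s. H #> s) ` S) = (\<lambda>s. H #> s) ` Aset S"
  using S by (auto simp: Q_inv subsetD image_image)

lemma Q_mult:
  assumes z: "z \<in> rcosets H" and g: "g \<in> carrier G"
  shows "z \<otimes>\<^bsub>G Mod H\<^esub> (H #> g) = z #> g"
proof -
  obtain a where a: "a \<in> carrier G" "z = H #> a" using z by (auto simp: RCOSETS_def)
  then show ?thesis using g by (simp add: rcos_sum coset_mult_assoc subset)
qed

lemma Q_shift_closed:
  assumes z: "z \<in> rcosets H" and g: "g \<in> carrier G"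
  shows "z #> g \<in> rcosets H"
proof -
  obtain a where a: "a \<in> carrier G" "z = H #> a" using z by (auto simp: RCOSETS_def)
  then show ?thesis using g by (simp add: coset_mult_assoc subset rcosetsI)
qed

lemma Q_dist_upper:
  assumes S: "S \<subseteq> carrier G" and gen: "generate G S = carrier G"
    and z: "z \<in> rcosets H" and g: "g \<in> carrier G"
  shows "word_dist (G Mod H) ((\<lambda>s. H #> s) ` S) z (z #> g) \<le> lenw G S g"
proof -
  obtain ws where ws: "set ws \<subseteq> Aset S" "length ws = lenw G S g" "g = wprod G ws"
    using lenw_word[OF S gen g] by blast
  show ?thesis
    unfolding word_dist_def Q_gens[OF S]
  proof (rule Least_le, intro exI conjI)
    show "set (map (\<lambda>s. H #> s) ws) \<subseteq> (\<lambda>s. H #> s) ` Aset S" using ws by auto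
    show "length (map (\<lambda>s. H #> s) ws) = lenw G S g" using ws by simp
    show "z #> g = z \<otimes>\<^bsub>G Mod H\<^esub> foldr (\<lambda>s t. s \<otimes>\<^bsub>G Mod H\<^esub> t) (map (\<lambda>s. H #> s) ws) \<one>\<^bsub>G Mod H\<^esub>"
      using Q_foldr[OF S ws(1)] Q_mult[OF z] g ws by simp
  qed
qed

lemma Q_dist_lower:
  assumes S: "S \<subseteq> carrier G" and gen: "generate G S = carrier G"
    and z: "z \<in> rcosets H" and g: "g \<in> carrier G"
    and ball: "\<And>x y. x \<in> carrier G \<Longrightarrow> y \<in> carrier G \<Longrightarrow> lenw G S x \<le> n \<Longrightarrow> lenw G S y \<le> n \<Longrightarrow>
                 H #> x = H #> y \<Longrightarrow> x = y"
    and gn: "lenw G S g \<le> n"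
  shows "lenw G S g \<le> word_dist (G Mod H) ((\<lambda>s. H #> s) ` S) z (z #> g)"
proof (rule ccontr)
  let ?Q = "G Mod H"
  let ?P = "\<lambda>m. \<exists>ws. set ws \<subseteq> (\<lambda>s. H #> s) ` Aset S \<and> length ws = m \<and>
       z #> g = z \<otimes>\<^bsub>?Q\<^esub> foldr (\<lambda>s t. s \<otimes>\<^bsub>?Q\<^esub> t) ws \<one>\<^bsub>?Q\<^esub>"
  assume less: "\<not> lenw G S g \<le> word_dist ?Q ((\<lambda>s. H #> s) ` S) z (z #> g)"
  have wd: "word_dist ?Q ((\<lambda>s. H #> s) ` S) z (z #> g) = (LEAST m. ?P m)"
    unfolding word_dist_def Q_gens[OF S] ..
  obtain ws0 where ws0: "set ws0 \<subseteq> Aset S" "length ws0 = lenw G S g" "g = wprod G ws0"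
    using lenw_word[OF S gen g] by blast
  have "?P (length ws0)"
    using Q_foldr[OF S ws0(1)] Q_mult[OF z] g ws0 by (intro exI[of _ "map (\<lambda>s. H #> s) ws0"]) auto
  then have "?P (LEAST m. ?P m)" by (rule LeastI)
  then obtain qs where qs: "set qs \<subseteq> (\<lambda>s. H #> s) ` Aset S"
      "length qs = (LEAST m. ?P m)" "z #> g = z \<otimes>\<^bsub>?Q\<^esub> foldr (\<lambda>s t. s \<otimes>\<^bsub>?Q\<^esub> t) qs \<one>\<^bsub>?Q\<^esub>"
    by blast
  obtain ws where ws: "qs = map (\<lambda>s. H #> s) ws" "set ws \<subseteq> Aset S" using map_lift[OF qs(1)] by blast
  let ?h = "wprod G ws"
  have h: "?h \<in> carrier G" using wprod_closed[OF S ws(2)] .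
  have zgh: "z #> g = z #> ?h"
    using qs(3) unfolding ws(1) Q_foldr[OF S ws(2)] Q_mult[OF z h] .
  obtain a where a: "a \<in> carrier G" "z = H #> a" using z by (auto simp: RCOSETS_def)
  have "H #> (a \<otimes> g) = H #> (a \<otimes> ?h)" using zgh a g h by (simp add: coset_mult_assoc subset)
  then have "a \<otimes> ?h \<in> H #> (a \<otimes> g)" using repr_independenceD[OF subgroup_axioms] a g h by simp
  then obtain k where k: "k \<in> H" "a \<otimes> ?h = k \<otimes> (a \<otimes> g)" by (auto simp: r_coset_def)
  have kc: "k \<in> carrier G" using k subset by auto
  have "?h = inv a \<otimes> k \<otimes> a \<otimes> g"
  proof -
    have "?h = inv a \<otimes> (a \<otimes> ?h)" using a h by (simp add: m_assoc[symmetric])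
    also have "\<dots> = inv a \<otimes> (k \<otimes> (a \<otimes> g))" using k by simp
    finally show ?thesis using a g kc by (simp add: m_assoc)
  qed
  moreover have "inv a \<otimes> k \<otimes> a \<in> H" using inv_op_closed1[OF a(1) k(1)] .
  ultimately have "?h \<in> H #> g" by (auto simp: r_coset_def)
  then have "H #> g = H #> ?h" by (rule repr_independence[OF _ g subgroup_axioms])
  moreover have lh: "lenw G S ?h \<le> length ws" by (rule lenw_le[OF S ws(2)])
  moreover have "length ws < lenw G S g" using less wd qs(2) ws(1) by simp
  ultimately have "g = ?h" using ball[OF g h gn] gn by linarith
  then show False using lh \<open>length ws < lenw G S g\<close> by simp
qed

end


lemma (in group) exists_injective_level:
  assumes S: "S \<subseteq> carrier G" "finite S" and gen: "generate G S = carrier G"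
    and Nn: "\<And>i. N i \<lhd> G" and dec: "\<And>i. N (Suc i) \<subseteq> N i" and triv: "(\<Inter>i. N i) = {\<one>}"
  shows "\<exists>j. \<forall>x\<in>carrier G. \<forall>y\<in>carrier G. lenw G S x \<le> n \<longrightarrow> lenw G S y \<le> n \<longrightarrow>
           N j #> x = N j #> y \<longrightarrow> x = y"
proof -
  let ?B = "{g \<in> carrier G. lenw G S g \<le> n}"
  let ?P = "{p \<in> ?B \<times> ?B. fst p \<noteq> snd p}"
  have finP: "finite ?P" using lenw_ball_finite[OF S gen, of n] by auto
  have "\<forall>p\<in>?P. \<exists>j. snd p \<otimes> inv (fst p) \<notin> N j"
  proof
    fix p assume p: "p \<in> ?P"
    then have "snd p \<otimes> inv (fst p) \<noteq> \<one>" using inv_equality by (auto simp: r_inv_ex) (metis inv_closed inv_inv inv_equality)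
    then show "\<exists>j. snd p \<otimes> inv (fst p) \<notin> N j" using triv by blast
  qed
  then obtain jf where jf: "\<forall>p\<in>?P. snd p \<otimes> inv (fst p) \<notin> N (jf p)" by (metis (no_types, lifting) bchoice)
  define J where "J = Max (insert 0 (jf ` ?P))"
  have anti: "i \<le> j \<Longrightarrow> N j \<subseteq> N i" for i j
    by (rule lift_Suc_antimono_le[of N]) (use dec in auto)
  show ?thesis
  proof (intro exI ballI impI)
    fix x y assume x: "x \<in> carrier G" and y: "y \<in> carrier G" and lx: "lenw G S x \<le> n"
      and ly: "lenw G S y \<le> n" and eq: "N J #> x = N J #> y"
    show "x = y"
    proof (rule ccontr)
      assume ne: "x \<noteq> y"
      then have p: "(x, y) \<in> ?P" using x y lx ly by auto
      have "jf (x,y) \<le> J" unfolding J_def using finP p by (intro Max_ge) auto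
      then have sub: "N J \<subseteq> N (jf (x,y))" by (rule anti)
      interpret NJ: normal "N J" G by (rule Nn)
      have "y \<in> N J #> x" using repr_independenceD[OF NJ.subgroup_axioms y eq] .
      then obtain k where k: "k \<in> N J" "y = k \<otimes> x" by (auto simp: r_coset_def)
      have "k \<in> carrier G" using k NJ.subset by auto
      then have "y \<otimes> inv x = k" using k x by (simp add: m_assoc)
      moreover have "y \<otimes> inv x \<notin> N (jf (x,y))" using jf p by auto
      ultimately show False using sub k by auto
    qed
  qed
qed




lemma meas_countable_slices:
  fixes \<Phi> :: "'i \<Rightarrow> 'b \<Rightarrow> real"
  assumes D: "countable D" and m: "\<And>x. x \<in> D \<Longrightarrow> \<Phi> x \<in> borel_measurable M"
    and z: "\<And>x \<omega>. x \<notin> D \<Longrightarrow> \<Phi> x \<omega> = 0"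
  shows "(\<lambda>y. \<Phi> (fst y) (snd y)) \<in> borel_measurable (count_space UNIV \<Otimes>\<^sub>M M)"
proof (cases "D = {}")
  case True
  then have "(\<lambda>y. \<Phi> (fst y) (snd y)) = (\<lambda>y. 0)" using z by auto
  then show ?thesis by simp
next
  case False
  then obtain d where d: "d \<in> D" by auto
  define g where "g y = (if fst y \<in> D then fst y else d)" for y :: "'i \<times> 'b"
  define F where "F i y = (if fst y \<in> D then \<Phi> i (snd y) else 0)" for i and y :: "'i \<times> 'b"
  have Dset: "{y \<in> space (count_space UNIV \<Otimes>\<^sub>M M). fst y \<in> D} \<in> sets (count_space UNIV \<Otimes>\<^sub>M M)"
  proof -
    have eqs: "{y \<in> space (count_space UNIV \<Otimes>\<^sub>M M). fst y \<in> D} = fst -` D \<inter> space (count_space UNIV \<Otimes>\<^sub>M M)"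
      by auto
    show ?thesis unfolding eqs by (rule measurable_sets[OF measurable_fst]) simp
  qed
  have "(\<lambda>y. F (g y) y) \<in> borel_measurable (count_space UNIV \<Otimes>\<^sub>M M)"
  proof (rule measurable_compose_countable'[OF _ _ D])
    fix i assume i: "i \<in> D"
    have "(\<lambda>y. \<Phi> i (snd y)) \<in> borel_measurable (count_space UNIV \<Otimes>\<^sub>M M)"
      using m[OF i] by (rule measurable_compose[OF measurable_snd])
    then show "(\<lambda>y. F i y) \<in> borel_measurable (count_space UNIV \<Otimes>\<^sub>M M)"
      unfolding F_def by (rule measurable_If[OF _ _ Dset]) simp_all
  next
    have h: "(\<lambda>x. if x \<in> D then x else d) \<in> measurable (count_space UNIV) (count_space D)"
      using d by (simp add: measurable_count_space_eq1)
    have "(\<lambda>y. (\<lambda>x. if x \<in> D then x else d) (fst y)) \<in> measurable (count_space UNIV \<Otimes>\<^sub>M M) (count_space D)"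
      by (rule measurable_compose[OF measurable_fst h])
    then show "g \<in> measurable (count_space UNIV \<Otimes>\<^sub>M M) (count_space D)" unfolding g_def[abs_def] .
  qed
  moreover have "(\<lambda>y. F (g y) y) = (\<lambda>y. \<Phi> (fst y) (snd y))"
    using z by (auto simp: F_def g_def)
  ultimately show ?thesis by simp
qed

lemma nn_integral_weights:
  fixes e :: "nat \<Rightarrow> real" and K :: "nat \<Rightarrow> 'z set"
  assumes K: "\<And>n. finite (K n)" "\<And>n. K n \<noteq> {}" and e: "\<And>n. 0 \<le> e n"
  shows "(\<integral>\<^sup>+x. ennreal (if snd x \<in> K (fst x) then e (fst x) / card (K (fst x)) else 0) \<partial>count_space UNIV)
         = (\<Sum>n. ennreal (e n))"
proof -
  define A where "A n = {n} \<times> K n" for n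
  have disj: "disjoint_family A" by (auto simp: disjoint_family_on_def A_def)
  have eq: "ennreal (if snd x \<in> K (fst x) then e (fst x) / card (K (fst x)) else 0)
      = (\<Sum>n. ennreal (e n / card (K n)) * indicator (A n) x)" for x
  proof (cases "snd x \<in> K (fst x)")
    case True
    then have "x \<in> A (fst x)" by (cases x) (auto simp: A_def)
    then show ?thesis using True by (simp add: suminf_cmult_indicator[OF disj])
  next
    case False
    then have "\<And>n. x \<notin> A n" by (auto simp: A_def)
    then show ?thesis using False by simp
  qed
  have "(\<integral>\<^sup>+x. ennreal (if snd x \<in> K (fst x) then e (fst x) / card (K (fst x)) else 0) \<partial>count_space UNIV)
      = (\<integral>\<^sup>+x. (\<Sum>n. ennreal (e n / card (K n)) * indicator (A n) x) \<partial>count_space UNIV)"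
    by (simp add: eq)
  also have "\<dots> = (\<Sum>n. \<integral>\<^sup>+x. ennreal (e n / card (K n)) * indicator (A n) x \<partial>count_space UNIV)"
    by (rule nn_integral_suminf) simp
  also have "\<dots> = (\<Sum>n. ennreal (e n))"
  proof (rule suminf_cong)
    fix n
    have fin: "finite (A n)" using K by (simp add: A_def)
    have cA: "card (A n) = card (K n)" by (simp add: A_def card_cartesian_product)
    have cpos: "card (K n) > 0" using K by (simp add: card_gt_0_iff)
    have "(\<integral>\<^sup>+x. ennreal (e n / card (K n)) * indicator (A n) x \<partial>count_space UNIV)
        = ennreal (e n / card (K n)) * emeasure (count_space UNIV) (A n)"
      by (simp add: nn_integral_cmult_indicator)
    also have "\<dots> = ennreal (e n / card (K n)) * of_nat (card (K n))"
      using fin cA by (simp add: emeasure_count_space_finite)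
    also have "\<dots> = ennreal (e n / card (K n)) * ennreal (real (card (K n)))"
      by (simp add: ennreal_of_nat_eq_real_of_nat)
    also have "\<dots> = ennreal (e n / card (K n) * card (K n))"
      by (rule ennreal_mult[symmetric]) (use e in auto)
    also have "\<dots> = ennreal (e n)" using cpos by simp
    finally show "(\<integral>\<^sup>+x. ennreal (e n / card (K n)) * indicator (A n) x \<partial>count_space UNIV) = ennreal (e n)" .
  qed
  finally show ?thesis .
qed


lemma powr_diff_bound:
  fixes a b q :: real assumes q: "0 \<le> q"
  shows "\<bar>a - b\<bar> powr q \<le> 2 powr q * (\<bar>a\<bar> powr q + \<bar>b\<bar> powr q)"
proof -
  have "\<bar>a - b\<bar> \<le> 2 * max \<bar>a\<bar> \<bar>b\<bar>" by linarith
  then have "\<bar>a - b\<bar> powr q \<le> (2 * max \<bar>a\<bar> \<bar>b\<bar>) powr q" by (intro powr_mono2) (use q in auto)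
  also have "\<dots> = 2 powr q * max \<bar>a\<bar> \<bar>b\<bar> powr q" by (simp add: powr_mult)
  also have "max \<bar>a\<bar> \<bar>b\<bar> powr q \<le> \<bar>a\<bar> powr q + \<bar>b\<bar> powr q"
    by (cases "\<bar>a\<bar> \<le> \<bar>b\<bar>") (auto simp: max_def)
  then have "2 powr q * max \<bar>a\<bar> \<bar>b\<bar> powr q \<le> 2 powr q * (\<bar>a\<bar> powr q + \<bar>b\<bar> powr q)"
    by (intro mult_left_mono) auto
  finally show ?thesis .
qed

lemma enn2real_ge1: "1 \<le> p \<Longrightarrow> p \<noteq> \<infinity> \<Longrightarrow> 1 \<le> enn2real p"
  by (cases p rule: ennreal_cases) (auto simp: ennreal_le_iff)

lemma Lp_diff:
  assumes p: "1 \<le> p" and F: "F \<in> Lp_space M p" and H: "H \<in> Lp_space M p"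
  shows "(\<lambda>x. F x - H x) \<in> Lp_space M p"
proof (cases "p = \<infinity>")
  case True
  have Fm: "F \<in> borel_measurable M" and Hm: "H \<in> borel_measurable M"
    using F H by (auto simp: Lp_space_def)
  have Fe: "esssup M (\<lambda>x. ereal \<bar>F x\<bar>) < \<infinity>" and He: "esssup M (\<lambda>x. ereal \<bar>H x\<bar>) < \<infinity>"
    using F H True by (auto simp: Lp_space_def)
  have "esssup M (\<lambda>x. ereal \<bar>F x - H x\<bar>) \<le> esssup M (\<lambda>x. ereal \<bar>F x\<bar> + ereal \<bar>H x\<bar>)"
    by (rule esssup_mono) (use Fm Hm in auto)
  also have "\<dots> \<le> esssup M (\<lambda>x. ereal \<bar>F x\<bar>) + esssup M (\<lambda>x. ereal \<bar>H x\<bar>)"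
    by (rule esssup_add)
  also have "\<dots> < \<infinity>" using Fe He by simp
  finally show ?thesis using True Fm Hm by (simp add: Lp_space_def)
next
  case False
  define q where "q = enn2real p"
  have q: "1 \<le> q" using enn2real_ge1[OF p False] by (simp add: q_def)
  have Fm: "F \<in> borel_measurable M" and Hm: "H \<in> borel_measurable M"
    using F H by (auto simp: Lp_space_def)
  have Fi: "integrable M (\<lambda>x. \<bar>F x\<bar> powr q)" and Hi: "integrable M (\<lambda>x. \<bar>H x\<bar> powr q)"
    using F H False by (auto simp: Lp_space_def q_def)
  have i1: "integrable M (\<lambda>x. 2 powr q * (\<bar>F x\<bar> powr q + \<bar>H x\<bar> powr q))"
    using Bochner_Integration.integrable_add[OF Fi Hi] by simp
  have m1: "(\<lambda>x. \<bar>F x - H x\<bar> powr q) \<in> borel_measurable M" using Fm Hm by measurable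
  have a1: "AE x in M. norm (\<bar>F x - H x\<bar> powr q) \<le> norm (2 powr q * (\<bar>F x\<bar> powr q + \<bar>H x\<bar> powr q))"
    using powr_diff_bound[of q] q by (intro AE_I2) simp
  have "integrable M (\<lambda>x. \<bar>F x - H x\<bar> powr q)"
    by (rule Bochner_Integration.integrable_bound[OF i1 m1 a1])
  then show ?thesis using False Fm Hm by (simp add: Lp_space_def q_def)
qed

lemma Lp_norm_pow:
  assumes p: "1 \<le> p" "p \<noteq> \<infinity>" and F: "F \<in> Lp_space M p"
  shows "(\<integral>\<^sup>+x. ennreal (\<bar>F x\<bar> powr enn2real p) \<partial>M) = ennreal (Lp_norm M p F powr enn2real p)"
    and "0 \<le> Lp_norm M p F"
proof -
  let ?q = "enn2real p"
  have q: "1 \<le> ?q" by (rule enn2real_ge1[OF p])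
  have Fi: "integrable M (\<lambda>x. \<bar>F x\<bar> powr ?q)" using F p by (auto simp: Lp_space_def)
  let ?I = "\<integral>x. \<bar>F x\<bar> powr ?q \<partial>M"
  have I0: "0 \<le> ?I" by (rule integral_nonneg_AE) simp
  have "(\<integral>\<^sup>+x. ennreal (\<bar>F x\<bar> powr ?q) \<partial>M) = ennreal ?I"
    by (rule nn_integral_eq_integral[OF Fi]) simp
  moreover have "Lp_norm M p F = ?I powr (1 / ?q)" using p by (simp add: Lp_norm_def)
  moreover have "(?I powr (1 / ?q)) powr ?q = ?I" using q I0 by (simp add: powr_powr)
  ultimately show "(\<integral>\<^sup>+x. ennreal (\<bar>F x\<bar> powr ?q) \<partial>M) = ennreal (Lp_norm M p F powr ?q)" by simp
  show "0 \<le> Lp_norm M p F" using p by (simp add: Lp_norm_def)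
qed




lemma tail_seq:
  fixes r :: "real \<Rightarrow> real"
  assumes rm: "mono_on (atLeast 0) r" and rt: "filterlim r at_top at_top"
  defines "T \<equiv> \<lambda>L::nat. inverse (sqrt (max 1 (r (real L))))"
  shows "\<And>n. T (Suc n) \<le> T n" and "\<And>n. 0 \<le> T n" and "T \<longlonglongrightarrow> 0"
    and "\<And>L. (\<Sum>n. ennreal (if L \<le> n then T n - T (Suc n) else 0)) = ennreal (T L)"
proof -
  show dec: "T (Suc n) \<le> T n" for n
  proof -
    have "r (real n) \<le> r (real (Suc n))" by (rule mono_onD[OF rm]) auto
    then have "max 1 (r (real n)) \<le> max 1 (r (real (Suc n)))" by simp
    then have "sqrt (max 1 (r (real n))) \<le> sqrt (max 1 (r (real (Suc n))))" by simp
    then show ?thesis unfolding T_def by (intro le_imp_inverse_le) auto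
  qed
  show nn: "0 \<le> T n" for n unfolding T_def by simp
  have lim: "filterlim (\<lambda>n. r (real n)) at_top sequentially"
    by (rule filterlim_compose[OF rt filterlim_real_sequentially])
  have lim2: "filterlim (\<lambda>n. max 1 (r (real n))) at_top sequentially"
    by (rule filterlim_at_top_mono[OF lim]) auto
  have lim3: "filterlim (\<lambda>n. sqrt (max 1 (r (real n)))) at_top sequentially"
    by (rule filterlim_compose[OF sqrt_at_top lim2])
  show T0: "T \<longlonglongrightarrow> 0" unfolding T_def by (rule tendsto_inverse_0_at_top[OF lim3])
  fix L
  have s1: "(\<lambda>n. T (n + L) - T (Suc (n + L))) sums (T (0 + L) - 0)"
  proof -
    have "(\<lambda>n. T (n + L)) \<longlonglongrightarrow> 0" using T0 by (rule LIMSEQ_ignore_initial_segment)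
    from telescope_sums'[OF this] show ?thesis by simp
  qed
  define e where "e n = (if L \<le> n then T n - T (Suc n) else 0)" for n
  have "(\<lambda>n. e (n + L)) sums T L" using s1 by (simp add: e_def)
  then have s2: "e sums T L" by (subst (asm) sums_zero_iff_shift) (auto simp: e_def)
  have e0: "0 \<le> e n" for n using dec[of n] by (simp add: e_def)
  have "(\<Sum>n. ennreal (e n)) = ennreal (\<Sum>n. e n)"
    by (rule suminf_ennreal2[OF e0 sums_summable[OF s2]])
  also have "\<dots> = ennreal (T L)" using s2 by (simp add: sums_iff)
  finally show "(\<Sum>n. ennreal (if L \<le> n then T n - T (Suc n) else 0)) = ennreal (T L)" by (simp add: e_def)
qed




locale boxsetup = group G for G :: "('g,'m) monoid_scheme" +
  fixes S :: "'g set" and N :: "nat \<Rightarrow> 'g set" and M :: "'a measure" and p :: ennreal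
    and f :: "nat \<times> 'g set \<Rightarrow> 'a \<Rightarrow> real" and rho1 rho2 :: "real \<Rightarrow> real" and idx :: "nat \<Rightarrow> nat"
  assumes finS: "finite S" and SG: "S \<subseteq> carrier G" and gen: "generate G S = carrier G"
    and Nn: "\<And>i. N i \<lhd> G" and fidx: "\<And>i. finite_index G (N i)"
    and p1: "1 \<le> p"
    and fLp: "\<And>x. x \<in> box_space G N \<Longrightarrow> f x \<in> Lp_space M p"
    and r1m: "mono_on (atLeast 0) rho1" and r2m: "mono_on (atLeast 0) rho2"
    and r1t: "filterlim rho1 at_top at_top"
    and bnd: "\<And>x y. x \<in> box_space G N \<Longrightarrow> y \<in> box_space G N \<Longrightarrow>
       rho1 (box_dist G S N x y) \<le> Lp_norm M p (\<lambda>w. f x w - f y w) \<and>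
       Lp_norm M p (\<lambda>w. f x w - f y w) \<le> rho2 (box_dist G S N x y)"
    and ball: "\<And>n x y. x \<in> carrier G \<Longrightarrow> y \<in> carrier G \<Longrightarrow> lenw G S x \<le> n \<Longrightarrow> lenw G S y \<le> n \<Longrightarrow>
       N (idx n) #>\<^bsub>G\<^esub> x = N (idx n) #>\<^bsub>G\<^esub> y \<Longrightarrow> x = y"
begin

definition K :: "nat \<Rightarrow> 'g set set" where "K n = rcosets\<^bsub>G\<^esub> (N (idx n))"

definition sh :: "'g \<Rightarrow> nat \<times> 'g set \<Rightarrow> nat \<times> 'g set" where
  "sh g x = (fst x, if snd x \<in> K (fst x) then snd x #>\<^bsub>G\<^esub> g else snd x)"

definition hh :: "'g \<Rightarrow> nat \<Rightarrow> 'g set \<Rightarrow> 'a \<Rightarrow> real" where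
  "hh g n z = (\<lambda>\<omega>. f (idx n, z) \<omega> - f (idx n, z #>\<^bsub>G\<^esub> g) \<omega>)"

definition bc :: "'g \<Rightarrow> (nat \<times> 'g set) \<times> 'a \<Rightarrow> real" where
  "bc g y = (if snd (fst y) \<in> K (fst (fst y)) then hh g (fst (fst y)) (snd (fst y)) (snd y) else 0)"

definition act :: "'g \<Rightarrow> ((nat \<times> 'g set) \<times> 'a \<Rightarrow> real) \<Rightarrow> (nat \<times> 'g set) \<times> 'a \<Rightarrow> real" where
  "act g F = (\<lambda>y. F (map_prod (sh g) id y))"

definition wt :: "(nat \<Rightarrow> real) \<Rightarrow> nat \<times> 'g set \<Rightarrow> real" where
  "wt e x = (if snd x \<in> K (fst x) then e (fst x) / card (K (fst x)) else 0)"

lemma K_finite: "finite (K n)"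
  using fidx by (simp add: K_def finite_index_def)

lemma K_nonempty: "K n \<noteq> {}"
proof -
  interpret Nn: normal "N (idx n)" G by (rule Nn)
  have "N (idx n) #>\<^bsub>G\<^esub> \<one>\<^bsub>G\<^esub> \<in> K n" unfolding K_def by (rule rcosetsI) (auto simp: Nn.subset)
  then show ?thesis by auto
qed

lemma K_subset: "z \<in> K n \<Longrightarrow> z \<subseteq> carrier G"
proof -
  interpret Nn: normal "N (idx n)" G by (rule Nn)
  assume "z \<in> K n" then show ?thesis
    by (auto simp: K_def RCOSETS_def r_coset_def Nn.subset[THEN subsetD])
qed

lemma K_shift: "z \<in> K n \<Longrightarrow> g \<in> carrier G \<Longrightarrow> z #>\<^bsub>G\<^esub> g \<in> K n"
proof -
  interpret Nn: normal "N (idx n)" G by (rule Nn)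
  show "z \<in> K n \<Longrightarrow> g \<in> carrier G \<Longrightarrow> z #>\<^bsub>G\<^esub> g \<in> K n" unfolding K_def by (rule Nn.Q_shift_closed)
qed

lemma K_box: "z \<in> K n \<Longrightarrow> (idx n, z) \<in> box_space G N"
  by (simp add: K_def box_space_def)

lemma D_countable: "countable {x. snd x \<in> K (fst x)}"
proof -
  have "{x. snd x \<in> K (fst x)} = (\<Union>n. {n} \<times> K n)" by auto
  then show ?thesis using K_finite by (simp add: countable_finite)
qed

lemma hh_Lp: "z \<in> K n \<Longrightarrow> g \<in> carrier G \<Longrightarrow> hh g n z \<in> Lp_space M p"
  unfolding hh_def by (intro Lp_diff[OF p1] fLp K_box K_shift)

lemma hh_dist_eq: "box_dist G S N (idx n, z) (idx n, z #>\<^bsub>G\<^esub> g) = real (word_dist (G Mod N (idx n)) ((\<lambda>s. N (idx n) #>\<^bsub>G\<^esub> s) ` S) z (z #>\<^bsub>G\<^esub> g))"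
  by (simp add: box_dist_def piece_dist_def)

lemma hh_upper:
  assumes z: "z \<in> K n" and g: "g \<in> carrier G"
  shows "Lp_norm M p (hh g n z) \<le> rho2 (real (lenw G S g))"
proof -
  interpret Nn: normal "N (idx n)" G by (rule Nn)
  have "Lp_norm M p (hh g n z) \<le> rho2 (box_dist G S N (idx n, z) (idx n, z #>\<^bsub>G\<^esub> g))"
    using bnd[OF K_box[OF z] K_box[OF K_shift[OF z g]]] by (simp add: hh_def)
  also have "\<dots> \<le> rho2 (real (lenw G S g))"
    using Nn.Q_dist_upper[OF SG gen z[unfolded K_def] g]
    by (intro mono_onD[OF r2m]) (auto simp: hh_dist_eq)
  finally show ?thesis .
qed

lemma hh_lower:
  assumes z: "z \<in> K n" and g: "g \<in> carrier G" and gn: "lenw G S g \<le> n"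
  shows "rho1 (real (lenw G S g)) \<le> Lp_norm M p (hh g n z)"
proof -
  interpret Nn: normal "N (idx n)" G by (rule Nn)
  have "rho1 (real (lenw G S g)) \<le> rho1 (box_dist G S N (idx n, z) (idx n, z #>\<^bsub>G\<^esub> g))"
    using Nn.Q_dist_lower[OF SG gen z[unfolded K_def] g ball gn]
    by (intro mono_onD[OF r1m]) (auto simp: hh_dist_eq)
  also have "\<dots> \<le> Lp_norm M p (hh g n z)"
    using bnd[OF K_box[OF z] K_box[OF K_shift[OF z g]]] by (simp add: hh_def)
  finally show ?thesis .
qed

lemma bc_meas: "g \<in> carrier G \<Longrightarrow> bc g \<in> borel_measurable (count_space UNIV \<Otimes>\<^sub>M M)"
proof -
  assume g: "g \<in> carrier G"
  let ?\<Phi> = "\<lambda>x. if snd x \<in> K (fst x) then hh g (fst x) (snd x) else (\<lambda>_. 0)"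
  have "(\<lambda>y. ?\<Phi> (fst y) (snd y)) \<in> borel_measurable (count_space UNIV \<Otimes>\<^sub>M M)"
    by (rule meas_countable_slices[OF D_countable])
       (use hh_Lp[OF _ g] in \<open>auto simp: Lp_space_def\<close>)
  moreover have "(\<lambda>y. ?\<Phi> (fst y) (snd y)) = bc g" by (auto simp: bc_def)
  ultimately show ?thesis by simp
qed


lemma sh_mult: "g \<in> carrier G \<Longrightarrow> h \<in> carrier G \<Longrightarrow> sh (g \<otimes>\<^bsub>G\<^esub> h) x = sh h (sh g x)"
  by (cases x) (auto simp: sh_def K_shift coset_mult_assoc K_subset)

lemma sh_one: "sh \<one>\<^bsub>G\<^esub> x = x"
  by (cases x) (auto simp: sh_def coset_mult_one K_subset)

lemma sh_inv: "g \<in> carrier G \<Longrightarrow> sh (inv\<^bsub>G\<^esub> g) (sh g x) = x"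
  using sh_mult[of g "inv\<^bsub>G\<^esub> g" x] sh_one by simp

lemma sh_inv2: "g \<in> carrier G \<Longrightarrow> sh g (sh (inv\<^bsub>G\<^esub> g) x) = x"
  using sh_mult[of "inv\<^bsub>G\<^esub> g" g x] sh_one by simp

lemma sh_bij: "g \<in> carrier G \<Longrightarrow> bij (sh g)"
  by (rule o_bij[of "sh (inv\<^bsub>G\<^esub> g)"]) (auto simp: sh_inv sh_inv2)

lemma wt_sh: "g \<in> carrier G \<Longrightarrow> wt e (sh g x) = wt e x"
  by (cases x) (auto simp: sh_def wt_def K_shift)

lemma bc_cocycle: "g \<in> carrier G \<Longrightarrow> h \<in> carrier G \<Longrightarrow> bc (g \<otimes>\<^bsub>G\<^esub> h) y = act g (bc h) y + bc g y"
  by (cases y) (auto simp: bc_def act_def hh_def sh_def K_shift coset_mult_assoc K_subset)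

lemma act_mult: "g \<in> carrier G \<Longrightarrow> h \<in> carrier G \<Longrightarrow> act (g \<otimes>\<^bsub>G\<^esub> h) F = act g (act h F)"
  by (auto simp: act_def sh_mult map_prod_def split: prod.splits)

lemma act_one: "act \<one>\<^bsub>G\<^esub> F = F"
  by (auto simp: act_def sh_one map_prod_def split: prod.splits)


lemma T_meas: "map_prod \<tau> id \<in> measurable (wmeas M w) (wmeas M w)"
proof -
  have m1: "(\<lambda>y. (\<tau> (fst y), snd y)) \<in> measurable (count_space UNIV \<Otimes>\<^sub>M M) (count_space UNIV \<Otimes>\<^sub>M M)"
    by (intro measurable_Pair measurable_compose[OF measurable_fst]) auto
  have eq: "map_prod \<tau> id = (\<lambda>y. (\<tau> (fst y), snd y))" by (auto simp: map_prod_def)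
  show ?thesis by (simp only: eq m1 measurable_wmeas_iff measurable_wmeas_iff2)
qed

lemma act_Lp:
  assumes g: "g \<in> carrier G" and F: "F \<in> Lp_space (wmeas M (wt e)) p"
  shows "act g F \<in> Lp_space (wmeas M (wt e)) p" and "Lp_norm (wmeas M (wt e)) p (act g F) = Lp_norm (wmeas M (wt e)) p F"
proof -
  let ?M0 = "wmeas M (wt e)"
  have pres: "distr ?M0 ?M0 (map_prod (sh g) id) = ?M0"
    by (rule wmeas_preserving[where w="wt e", OF sh_bij[OF g] wt_sh[OF g]])
  have Fm: "F \<in> borel_measurable ?M0" using F by (simp add: Lp_space_def)
  note L = Lp_distr[OF T_meas[of "sh g"] Fm, where p=p, unfolded pres]
  show "act g F \<in> Lp_space ?M0 p" using L(2) F by (simp add: act_def)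
  show "Lp_norm ?M0 p (act g F) = Lp_norm ?M0 p F" using L(1) by (simp add: act_def)
qed

lemma act_ae:
  assumes g: "g \<in> carrier G" and Fm: "F \<in> borel_measurable (wmeas M (wt e))" and Hm: "H \<in> borel_measurable (wmeas M (wt e))"
    and ae: "ae_eq (wmeas M (wt e)) F H"
  shows "ae_eq (wmeas M (wt e)) (act g F) (act g H)"
proof -
  let ?M0 = "wmeas M (wt e)"
  have pres: "distr ?M0 ?M0 (map_prod (sh g) id) = ?M0"
    by (rule wmeas_preserving[where w="wt e", OF sh_bij[OF g] wt_sh[OF g]])
  show ?thesis using ae_eq_distr[OF T_meas[of "sh g"] Fm Hm, unfolded pres] ae by (simp add: act_def)
qed

end




context boxsetup
begin

lemma wt_nonneg: "(\<And>n. 0 \<le> e n) \<Longrightarrow> 0 \<le> wt e x"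
  by (auto simp: wt_def)

lemma nnint_bc:
  assumes pinf: "p \<noteq> \<infinity>" and g: "g \<in> carrier G" and e: "\<And>n. 0 \<le> e n"
  shows "(\<integral>\<^sup>+y. ennreal (\<bar>bc g y\<bar> powr enn2real p) \<partial>wmeas M (wt e))
       = (\<integral>\<^sup>+x. ennreal (wt e x * Lp_norm M p (hh g (fst x) (snd x)) powr enn2real p) \<partial>count_space UNIV)"
proof -
  let ?q = "enn2real p"
  have m: "(\<lambda>y. ennreal (\<bar>bc g y\<bar> powr ?q)) \<in> borel_measurable (count_space UNIV \<Otimes>\<^sub>M M)"
    using bc_meas[OF g] by measurable
  show ?thesis
    unfolding nn_integral_wmeas[OF m]
  proof (rule nn_integral_cong)
    fix x :: "nat \<times> 'g set"
    show "ennreal (wt e x) * (\<integral>\<^sup>+\<omega>. ennreal (\<bar>bc g (x, \<omega>)\<bar> powr ?q) \<partial>M)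
        = ennreal (wt e x * Lp_norm M p (hh g (fst x) (snd x)) powr ?q)"
    proof (cases "snd x \<in> K (fst x)")
      case True
      have "(\<integral>\<^sup>+\<omega>. ennreal (\<bar>bc g (x, \<omega>)\<bar> powr ?q) \<partial>M) = (\<integral>\<^sup>+\<omega>. ennreal (\<bar>hh g (fst x) (snd x) \<omega>\<bar> powr ?q) \<partial>M)"
        using True by (simp add: bc_def)
      also have "\<dots> = ennreal (Lp_norm M p (hh g (fst x) (snd x)) powr ?q)"
        by (rule Lp_norm_pow(1)[OF p1 pinf hh_Lp[OF True g]])
      finally show ?thesis using wt_nonneg[OF e] by (simp add: ennreal_mult)
    next
      case False then show ?thesis by (simp add: wt_def)
    qed
  qed
qed

definition Tq :: "nat \<Rightarrow> real" where "Tq L = inverse (sqrt (max 1 (rho1 (real L))))"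
definition ew :: "nat \<Rightarrow> real" where "ew n = Tq n - Tq (Suc n)"

lemma Tq_props:
  shows "\<And>n. 0 \<le> ew n" and "\<And>L. (\<Sum>n. ennreal (if L \<le> n then ew n else 0)) = ennreal (Tq L)"
proof -
  note tl = tail_seq[OF r1m r1t]
  show "0 \<le> ew n" for n using tl(1)[of n] unfolding ew_def Tq_def by linarith
  show "(\<Sum>n. ennreal (if L \<le> n then ew n else 0)) = ennreal (Tq L)" for L
    using tl(4)[of L] unfolding ew_def Tq_def .
qed

lemma eq_sum: "(\<Sum>n. ennreal (ew n)) = ennreal (Tq 0)"
  using Tq_props(2)[of 0] by simp

lemma bc_Lp_fin:
  assumes pinf: "p \<noteq> \<infinity>" and g: "g \<in> carrier G"
  shows "bc g \<in> Lp_space (wmeas M (wt ew)) p"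
proof -
  let ?q = "enn2real p"
  have q: "1 \<le> ?q" by (rule enn2real_ge1[OF p1 pinf])
  define B where "B = max 0 (rho2 (real (lenw G S g)))"
  have le: "ennreal (wt ew x * Lp_norm M p (hh g (fst x) (snd x)) powr ?q) \<le> ennreal (wt ew x) * ennreal (B powr ?q)" for x
  proof (cases "snd x \<in> K (fst x)")
    case True
    have A0: "0 \<le> Lp_norm M p (hh g (fst x) (snd x))" by (rule Lp_norm_pow(2)[OF p1 pinf hh_Lp[OF True g]])
    have "Lp_norm M p (hh g (fst x) (snd x)) \<le> B" using hh_upper[OF True g] by (simp add: B_def)
    then have "Lp_norm M p (hh g (fst x) (snd x)) powr ?q \<le> B powr ?q" using A0 q by (intro powr_mono2) auto
    then have "wt ew x * Lp_norm M p (hh g (fst x) (snd x)) powr ?q \<le> wt ew x * B powr ?q"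
      by (intro mult_left_mono wt_nonneg Tq_props(1))
    then show ?thesis using wt_nonneg[of ew x] Tq_props(1) by (simp add: ennreal_mult[symmetric] ennreal_leI)
  next
    case False then show ?thesis by (simp add: wt_def)
  qed
  have "(\<integral>\<^sup>+y. ennreal (\<bar>bc g y\<bar> powr ?q) \<partial>wmeas M (wt ew))
      \<le> (\<integral>\<^sup>+x. ennreal (wt ew x) * ennreal (B powr ?q) \<partial>count_space UNIV)"
    unfolding nnint_bc[OF pinf g Tq_props(1)] by (intro nn_integral_mono le)
  also have "\<dots> = (\<integral>\<^sup>+x. ennreal (wt ew x) \<partial>count_space UNIV) * ennreal (B powr ?q)"
    by (simp add: nn_integral_multc)
  also have "(\<integral>\<^sup>+x. ennreal (wt ew x) \<partial>count_space UNIV) = ennreal (Tq 0)"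
    unfolding wt_def using nn_integral_weights[where K=K and e=ew, OF K_finite K_nonempty Tq_props(1)] eq_sum by simp
  finally have fin0: "(\<integral>\<^sup>+y. ennreal (\<bar>bc g y\<bar> powr ?q) \<partial>wmeas M (wt ew)) \<le> ennreal (Tq 0) * ennreal (B powr ?q)" .
  have "ennreal (Tq 0) * ennreal (B powr ?q) < \<infinity>" by (simp add: ennreal_mult_less_top)
  with fin0 have fin: "(\<integral>\<^sup>+y. ennreal (\<bar>bc g y\<bar> powr ?q) \<partial>wmeas M (wt ew)) < \<infinity>"
    by (rule le_less_trans)
  have bm: "bc g \<in> borel_measurable (wmeas M (wt ew))" using bc_meas[OF g] by simp
  have "integrable (wmeas M (wt ew)) (\<lambda>y. \<bar>bc g y\<bar> powr ?q)"
    unfolding integrable_iff_bounded using fin bm by auto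
  then show ?thesis using bm pinf by (simp add: Lp_space_def)
qed


lemma bc_lower_fin:
  assumes pinf: "p \<noteq> \<infinity>" and g: "g \<in> carrier G" and r1: "1 \<le> rho1 (real (lenw G S g))"
  shows "sqrt (rho1 (real (lenw G S g))) \<le> Lp_norm (wmeas M (wt ew)) p (bc g) powr enn2real p"
proof -
  let ?q = "enn2real p"
  let ?l = "lenw G S g"
  let ?r = "rho1 (real ?l)"
  have q: "1 \<le> ?q" by (rule enn2real_ge1[OF p1 pinf])
  define e' where "e' n = (if ?l \<le> n then ew n else 0)" for n
  have e'0: "0 \<le> e' n" for n using Tq_props(1) by (simp add: e'_def)
  have le: "ennreal (wt e' x) * ennreal (?r powr ?q) \<le> ennreal (wt ew x * Lp_norm M p (hh g (fst x) (snd x)) powr ?q)" for x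
  proof (cases "snd x \<in> K (fst x) \<and> ?l \<le> fst x")
    case True
    have "?r \<le> Lp_norm M p (hh g (fst x) (snd x))" using hh_lower[of "snd x" "fst x" g] True g by simp
    then have "?r powr ?q \<le> Lp_norm M p (hh g (fst x) (snd x)) powr ?q" using r1 q by (intro powr_mono2) auto
    then have "wt ew x * ?r powr ?q \<le> wt ew x * Lp_norm M p (hh g (fst x) (snd x)) powr ?q"
      by (intro mult_left_mono wt_nonneg Tq_props(1))
    moreover have "wt e' x = wt ew x" using True by (simp add: wt_def e'_def)
    ultimately show ?thesis using wt_nonneg[of ew x] Tq_props(1) by (simp add: ennreal_mult[symmetric] ennreal_leI)
  next
    case False then show ?thesis by (auto simp: wt_def e'_def)
  qed
  have "ennreal (Tq ?l) * ennreal (?r powr ?q) = (\<integral>\<^sup>+x. ennreal (wt e' x) \<partial>count_space UNIV) * ennreal (?r powr ?q)"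
  proof -
    have "(\<integral>\<^sup>+x. ennreal (wt e' x) \<partial>count_space UNIV) = (\<Sum>n. ennreal (e' n))"
      unfolding wt_def by (rule nn_integral_weights[where K=K and e=e', OF K_finite K_nonempty e'0])
    also have "\<dots> = ennreal (Tq ?l)" using Tq_props(2)[of ?l] by (simp add: e'_def)
    finally show ?thesis by simp
  qed
  also have "\<dots> = (\<integral>\<^sup>+x. ennreal (wt e' x) * ennreal (?r powr ?q) \<partial>count_space UNIV)"
    by (simp add: nn_integral_multc)
  also have "\<dots> \<le> (\<integral>\<^sup>+x. ennreal (wt ew x * Lp_norm M p (hh g (fst x) (snd x)) powr ?q) \<partial>count_space UNIV)"
    by (intro nn_integral_mono le)
  also have "\<dots> = (\<integral>\<^sup>+y. ennreal (\<bar>bc g y\<bar> powr ?q) \<partial>wmeas M (wt ew))"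
    by (rule nnint_bc[OF pinf g Tq_props(1), symmetric])
  also have "\<dots> = ennreal (Lp_norm (wmeas M (wt ew)) p (bc g) powr ?q)"
    by (rule Lp_norm_pow(1)[OF p1 pinf bc_Lp_fin[OF pinf g]])
  finally have "ennreal (Tq ?l * ?r powr ?q) \<le> ennreal (Lp_norm (wmeas M (wt ew)) p (bc g) powr ?q)"
    using Tq_props(1) by (simp add: ennreal_mult Tq_def)
  then have main: "Tq ?l * ?r powr ?q \<le> Lp_norm (wmeas M (wt ew)) p (bc g) powr ?q"
    by (subst (asm) ennreal_le_iff) auto
  have "?r powr 1 \<le> ?r powr ?q" by (rule powr_mono) (use q r1 in auto)
  then have rq: "?r \<le> ?r powr ?q" using r1 by simp
  have Tl: "Tq ?l = inverse (sqrt ?r)" using r1 by (simp add: Tq_def)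
  have sp: "sqrt ?r * sqrt ?r = ?r" using r1 by simp
  have spos: "0 < sqrt ?r" using r1 by simp
  have "sqrt ?r = inverse (sqrt ?r) * (sqrt ?r * sqrt ?r)" using spos by (simp add: field_simps)
  also have "\<dots> = inverse (sqrt ?r) * ?r" by (simp only: sp)
  also have "\<dots> \<le> Tq ?l * ?r powr ?q" unfolding Tl by (rule mult_left_mono[OF rq]) (use r1 in simp)
  finally show ?thesis using main by linarith
qed

end




context boxsetup
begin

definition one_w :: "nat \<Rightarrow> real" where "one_w n = 1"

lemma ereal_le_real_of: "(x::ereal) < \<infinity> \<Longrightarrow> x \<le> ereal (real_of_ereal x)"
  by (cases x) auto

lemma bc_Lp_inf:
  assumes pinf: "p = \<infinity>" and g: "g \<in> carrier G"
  shows "bc g \<in> Lp_space (wmeas M (wt one_w)) p"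
proof -
  let ?M1 = "wmeas M (wt one_w)"
  define B where "B = max 0 (rho2 (real (lenw G S g)))"
  have bm: "bc g \<in> borel_measurable (count_space UNIV \<Otimes>\<^sub>M M)" by (rule bc_meas[OF g])
  have AE: "AE y in ?M1. ereal \<bar>bc g y\<bar> \<le> ereal B"
  proof (rule AE_wmeas_I)
    show "{y \<in> space (count_space UNIV \<Otimes>\<^sub>M M). \<not> ereal \<bar>bc g y\<bar> \<le> ereal B} \<in> sets (count_space UNIV \<Otimes>\<^sub>M M)"
      using bm by measurable
    fix x :: "nat \<times> 'g set" assume "wt one_w x > 0"
    then have xK: "snd x \<in> K (fst x)" by (auto simp: wt_def split: if_splits)
    let ?h = "hh g (fst x) (snd x)"
    have hL: "?h \<in> Lp_space M p" by (rule hh_Lp[OF xK g])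
    have fin: "esssup M (\<lambda>\<omega>. ereal \<bar>?h \<omega>\<bar>) < \<infinity>" using hL pinf by (simp add: Lp_space_def)
    have "esssup M (\<lambda>\<omega>. ereal \<bar>?h \<omega>\<bar>) \<le> ereal (Lp_norm M p ?h)"
      using ereal_le_real_of[OF fin] pinf by (simp add: Lp_norm_def)
    also have "\<dots> \<le> ereal B" using hh_upper[OF xK g] unfolding B_def ereal_less_eq(3) by linarith
    finally have es: "esssup M (\<lambda>\<omega>. ereal \<bar>?h \<omega>\<bar>) \<le> ereal B" .
    show "AE \<omega> in M. ereal \<bar>bc g (x, \<omega>)\<bar> \<le> ereal B"
      using esssup_AE[of "\<lambda>\<omega>. ereal \<bar>?h \<omega>\<bar>" M]
    proof (rule AE_mp, intro AE_I2 impI)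
      fix \<omega> assume "ereal \<bar>?h \<omega>\<bar> \<le> esssup M (\<lambda>\<omega>. ereal \<bar>?h \<omega>\<bar>)"
      then have "ereal \<bar>?h \<omega>\<bar> \<le> ereal B" using es by (rule order.trans)
      then show "ereal \<bar>bc g (x, \<omega>)\<bar> \<le> ereal B" using xK by (simp add: bc_def)
    qed
  qed
  have bm1: "(\<lambda>y. ereal \<bar>bc g y\<bar>) \<in> borel_measurable ?M1" using bm by simp
  have "esssup ?M1 (\<lambda>y. ereal \<bar>bc g y\<bar>) \<le> ereal B" by (rule esssup_I[OF bm1 AE])
  then have "esssup ?M1 (\<lambda>y. ereal \<bar>bc g y\<bar>) < \<infinity>" using le_less_trans by fastforce
  then show ?thesis using bm pinf by (simp add: Lp_space_def)
qed

lemma bc_lower_inf: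
  assumes pinf: "p = \<infinity>" and g: "g \<in> carrier G" and r1: "0 < rho1 (real (lenw G S g))"
  shows "rho1 (real (lenw G S g)) \<le> Lp_norm (wmeas M (wt one_w)) p (bc g)"
proof -
  let ?M1 = "wmeas M (wt one_w)"
  let ?l = "lenw G S g"
  obtain z0 where z0: "z0 \<in> K ?l" using K_nonempty by blast
  let ?h = "hh g ?l z0"
  have wpos: "wt one_w (?l, z0) > 0" using z0 K_finite K_nonempty by (auto simp: wt_def one_w_def card_gt_0_iff)
  have bm: "bc g \<in> borel_measurable (count_space UNIV \<Otimes>\<^sub>M M)" by (rule bc_meas[OF g])
  have bm1: "(\<lambda>y. ereal \<bar>bc g y\<bar>) \<in> borel_measurable ?M1" using bm by simp
  have hm: "(\<lambda>\<omega>. ereal \<bar>?h \<omega>\<bar>) \<in> borel_measurable M"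
  proof -
    have "?h \<in> borel_measurable M" using hh_Lp[OF z0 g] by (simp add: Lp_space_def)
    then show ?thesis by measurable
  qed
  have sub: "{c. AE y in ?M1. ereal \<bar>bc g y\<bar> \<le> c} \<subseteq> {c. AE \<omega> in M. ereal \<bar>?h \<omega>\<bar> \<le> c}"
  proof
    fix c assume "c \<in> {c. AE y in ?M1. ereal \<bar>bc g y\<bar> \<le> c}"
    then have "AE \<omega> in M. ereal \<bar>bc g ((?l, z0), \<omega>)\<bar> \<le> c"
      by (intro AE_wmeas_D[where w="wt one_w" and P="\<lambda>y. ereal \<bar>bc g y\<bar> \<le> c", OF _ wpos]) simp
    then show "c \<in> {c. AE \<omega> in M. ereal \<bar>?h \<omega>\<bar> \<le> c}" using z0 by (simp add: bc_def)
  qed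
  have ab: "esssup M (\<lambda>\<omega>. ereal \<bar>?h \<omega>\<bar>) \<le> esssup ?M1 (\<lambda>y. ereal \<bar>bc g y\<bar>)"
    unfolding esssup_eq_AE[OF hm] esssup_eq_AE[OF bm1] by (rule Inf_superset_mono[OF sub])
  have lo: "rho1 (real ?l) \<le> Lp_norm M p ?h" by (rule hh_lower[OF z0 g]) simp
  then have a_pos: "0 < real_of_ereal (esssup M (\<lambda>\<omega>. ereal \<bar>?h \<omega>\<bar>))"
    using r1 pinf by (simp add: Lp_norm_def)
  then have a0: "0 \<le> esssup M (\<lambda>\<omega>. ereal \<bar>?h \<omega>\<bar>)"
    by (cases "esssup M (\<lambda>\<omega>. ereal \<bar>?h \<omega>\<bar>)") auto
  have bfin: "esssup ?M1 (\<lambda>y. ereal \<bar>bc g y\<bar>) \<noteq> \<infinity>"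
    using bc_Lp_inf[OF pinf g] pinf by (simp add: Lp_space_def)
  have "real_of_ereal (esssup M (\<lambda>\<omega>. ereal \<bar>?h \<omega>\<bar>)) \<le> real_of_ereal (esssup ?M1 (\<lambda>y. ereal \<bar>bc g y\<bar>))"
    by (rule real_of_ereal_positive_mono[OF a0 ab bfin])
  then show ?thesis using lo pinf by (simp add: Lp_norm_def)
qed

end




context boxsetup
begin

lemma eventually_rho1: "\<exists>L0::nat. \<forall>n\<ge>L0. Z \<le> rho1 (real n)"
proof -
  have "eventually (\<lambda>x. Z \<le> rho1 x) at_top" using r1t by (simp add: filterlim_at_top)
  then obtain X where X: "\<And>x. x \<ge> X \<Longrightarrow> Z \<le> rho1 x" by (auto simp: eventually_at_top_linorder)
  show ?thesis
  proof (intro exI allI impI)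
    fix n assume "nat \<lceil>X\<rceil> \<le> n"
    then have "X \<le> real n" by linarith
    then show "Z \<le> rho1 (real n)" by (rule X)
  qed
qed

lemma proper_generic:
  fixes Lpn :: "'g \<Rightarrow> real"
  assumes key: "\<And>g. g \<in> carrier G \<Longrightarrow> Z \<le> rho1 (real (lenw G S g)) \<Longrightarrow> R < Lpn g"
  shows "finite {g \<in> carrier G. Lpn g \<le> R}"
proof -
  obtain L0 where L0: "\<And>n. n \<ge> L0 \<Longrightarrow> Z \<le> rho1 (real n)" using eventually_rho1[of Z] by blast
  have "{g \<in> carrier G. Lpn g \<le> R} \<subseteq> {g \<in> carrier G. lenw G S g \<le> L0}"
  proof safe
    fix g assume g: "g \<in> carrier G" and le: "Lpn g \<le> R"
    show "lenw G S g \<le> L0"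
    proof (rule ccontr)
      assume "\<not> lenw G S g \<le> L0"
      then have "Z \<le> rho1 (real (lenw G S g))" by (intro L0) simp
      then have "R < Lpn g" by (rule key[OF g])
      then show False using le by linarith
    qed
  qed
  moreover have "finite {g \<in> carrier G. lenw G S g \<le> L0}" by (rule lenw_ball_finite[OF SG finS gen])
  ultimately show ?thesis by (rule finite_subset)
qed

lemma main_exists: "\<exists>e. proper_affine_Lp_action G (wmeas M (wt e)) p act bc"
proof -
  define e where "e = (if p = \<infinity> then one_w else ew)"
  let ?M0 = "wmeas M (wt e)"
  have bcL: "bc g \<in> Lp_space ?M0 p" if g: "g \<in> carrier G" for g
    using bc_Lp_inf[OF _ g] bc_Lp_fin[OF _ g] by (cases "p = \<infinity>") (auto simp: e_def)
  have proper: "finite {g \<in> carrier G. Lp_norm ?M0 p (bc g) \<le> R}" for R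
  proof (cases "p = \<infinity>")
    case True
    show ?thesis
    proof (rule proper_generic[where Z="\<bar>R\<bar> + 1"])
      fix g assume g: "g \<in> carrier G" and z: "\<bar>R\<bar> + 1 \<le> rho1 (real (lenw G S g))"
      have "rho1 (real (lenw G S g)) \<le> Lp_norm ?M0 p (bc g)"
        using bc_lower_inf[OF True g] z True by (simp add: e_def)
      then show "R < Lp_norm ?M0 p (bc g)" using z by linarith
    qed
  next
    case False
    let ?q = "enn2real p"
    have q: "1 \<le> ?q" by (rule enn2real_ge1[OF p1 False])
    let ?a = "\<bar>R\<bar> + 1"
    show ?thesis
    proof (rule proper_generic[where Z="max 1 ((?a powr ?q)\<^sup>2)"])
      fix g assume g: "g \<in> carrier G" and z: "max 1 ((?a powr ?q)\<^sup>2) \<le> rho1 (real (lenw G S g))"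
      have "sqrt (rho1 (real (lenw G S g))) \<le> Lp_norm ?M0 p (bc g) powr ?q"
        using bc_lower_fin[OF False g] z False by (simp add: e_def)
      moreover have "?a powr ?q \<le> sqrt (rho1 (real (lenw G S g)))"
        by (rule real_le_rsqrt) (use z in simp)
      ultimately have le: "?a powr ?q \<le> Lp_norm ?M0 p (bc g) powr ?q" by linarith
      have n0: "0 \<le> Lp_norm ?M0 p (bc g)" by (rule Lp_norm_pow(2)[OF p1 False bcL[OF g]])
      have "?a \<le> Lp_norm ?M0 p (bc g)"
      proof (rule ccontr)
        assume "\<not> ?a \<le> Lp_norm ?M0 p (bc g)"
        then have "Lp_norm ?M0 p (bc g) powr ?q < ?a powr ?q"
          using n0 q by (intro powr_less_mono2) auto
        then show False using le by linarith
      qed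
      then show "R < Lp_norm ?M0 p (bc g)" by linarith
    qed
  qed
  show ?thesis
  proof (intro exI[of _ e])
    show "proper_affine_Lp_action G ?M0 p act bc"
      unfolding proper_affine_Lp_action_def
    proof (intro conjI ballI allI impI)
      fix g F assume g: "g \<in> carrier G" and F: "F \<in> Lp_space ?M0 p"
      show "act g F \<in> Lp_space ?M0 p" by (rule act_Lp(1)[OF g F])
      show "Lp_norm ?M0 p (act g F) = Lp_norm ?M0 p F" by (rule act_Lp(2)[OF g F])
    next
      fix g F H assume g: "g \<in> carrier G" and F: "F \<in> Lp_space ?M0 p" and H: "H \<in> Lp_space ?M0 p"
        and ae: "ae_eq ?M0 F H"
      show "ae_eq ?M0 (act g F) (act g H)"
        by (rule act_ae[OF g _ _ ae]) (use F H in \<open>auto simp: Lp_space_def\<close>)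
    next
      fix g F H c
      show "ae_eq ?M0 (act g (\<lambda>x. F x + c * H x)) (\<lambda>x. act g F x + c * act g H x)"
        by (simp add: ae_eq_def act_def)
    next
      fix F show "ae_eq ?M0 (act \<one>\<^bsub>G\<^esub> F) F" by (simp add: ae_eq_def act_one)
    next
      fix g h F assume g: "g \<in> carrier G" and h: "h \<in> carrier G"
      show "ae_eq ?M0 (act (g \<otimes>\<^bsub>G\<^esub> h) F) (act g (act h F))" by (simp add: ae_eq_def act_mult[OF g h])
    next
      fix g assume g: "g \<in> carrier G"
      show "bc g \<in> Lp_space ?M0 p" by (rule bcL[OF g])
    next
      fix g h assume g: "g \<in> carrier G" and h: "h \<in> carrier G"
      show "ae_eq ?M0 (bc (g \<otimes>\<^bsub>G\<^esub> h)) (\<lambda>x. act g (bc h) x + bc g x)"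
        by (simp add: ae_eq_def bc_cocycle[OF g h])
    next
      fix R :: real show "finite {g \<in> carrier G. Lp_norm ?M0 p (bc g) \<le> R}" by (rule proper)
    qed
  qed
qed

end




definition encf :: "(nat \<times> 'g set) \<times> 'a \<Rightarrow> (nat \<Rightarrow> nat \<Rightarrow> 'g \<Rightarrow> 'a \<Rightarrow> real)" where
  "encf y = (\<lambda>a b g c. if a = fst (fst y) \<and> c = snd y then (if g \<in> snd (fst y) then 1 else 2) else 0)"

definition enc :: "(nat \<times> 'g set) \<times> 'a \<Rightarrow> (nat \<Rightarrow> nat \<Rightarrow> 'g \<Rightarrow> 'a \<Rightarrow> real) set set set" where
  "enc y = {{{encf y}}}"

lemma inj_enc: "inj (enc :: (nat \<times> 'g set) \<times> 'a \<Rightarrow> _)"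
proof (rule injI)
  fix y1 y2 :: "(nat \<times> 'g set) \<times> 'a"
  assume "enc y1 = enc y2"
  then have eqf0: "encf y1 = encf y2" by (simp add: enc_def)
  obtain n1 z1 w1 where y1: "y1 = ((n1, z1), w1)" by (metis prod.collapse)
  obtain n2 z2 w2 where y2: "y2 = ((n2, z2), w2)" by (metis prod.collapse)
  have e: "\<And>g. (if n1 = n2 \<and> w1 = w2 then (if g \<in> z2 then 1 else 2) else 0 :: real) = (if g \<in> z1 then 1 else 2)"
    using fun_cong[OF fun_cong[OF fun_cong[OF fun_cong[OF eqf0, of n1], of 0]], of _ w1] y1 y2
    by (simp add: encf_def split: if_splits)
  have nw: "n1 = n2 \<and> w1 = w2" using e[of undefined] by (auto split: if_splits)
  have "z1 = z2"
  proof
    show "z1 \<subseteq> z2"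
    proof
      fix g assume "g \<in> z1" then show "g \<in> z2" using e[of g] nw by (auto split: if_splits)
    qed
    show "z2 \<subseteq> z1"
    proof
      fix g assume "g \<in> z2" then show "g \<in> z1" using e[of g] nw by (auto split: if_splits)
    qed
  qed
  then show "y1 = y2" using y1 y2 nw by simp
qed

theorem proposition1p2:
  fixes G :: "('g, 'm) monoid_scheme"
    and S :: "'g set"
    and N :: "nat \<Rightarrow> 'g set"
    and p :: ennreal
    and M :: "'a measure"
    and f :: "nat \<times> 'g set \<Rightarrow> 'a \<Rightarrow> real"
  assumes "group G"
    and "finite S" and "S \<subseteq> carrier G" and "generate G S = carrier G"
    and "residually_finite G"
    and "\<And>i. N i \<lhd> G" and "\<And>i. finite_index G (N i)"
    and "\<And>i. N (Suc i) \<subseteq> N i"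
    and "(\<Inter>i. N i) = {\<one>\<^bsub>G\<^esub>}"
    and "1 \<le> p"
    and "coarse_embedding_Lp (box_space G N) (box_dist G S N) M p f"
  shows "\<exists>(M' :: (nat \<Rightarrow> nat \<Rightarrow> 'g \<Rightarrow> 'a \<Rightarrow> real) set set set measure) \<pi> b.
           proper_affine_Lp_action G M' p \<pi> b"
proof -
  interpret grp: group G by fact
  obtain rho1 rho2 :: "real \<Rightarrow> real" where
    r: "mono_on (atLeast 0) rho1" "mono_on (atLeast 0) rho2"
       "filterlim rho1 at_top at_top" "filterlim rho2 at_top at_top"
       "\<forall>x\<in>box_space G N. \<forall>y\<in>box_space G N. rho1 (box_dist G S N x y) \<le> Lp_norm M p (\<lambda>w. f x w - f y w) \<and>
                       Lp_norm M p (\<lambda>w. f x w - f y w) \<le> rho2 (box_dist G S N x y)"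
    and fLp: "\<forall>x\<in>box_space G N. f x \<in> Lp_space M p"
    using assms(11) unfolding coarse_embedding_Lp_def by blast
  have "\<forall>n. \<exists>j. \<forall>x\<in>carrier G. \<forall>y\<in>carrier G. lenw G S x \<le> n \<longrightarrow> lenw G S y \<le> n \<longrightarrow>
           N j #>\<^bsub>G\<^esub> x = N j #>\<^bsub>G\<^esub> y \<longrightarrow> x = y"
    using grp.exists_injective_level[OF assms(3) assms(2) assms(4) assms(6) assms(8) assms(9)] by blast
  then obtain idx where idx: "\<And>n. \<forall>x\<in>carrier G. \<forall>y\<in>carrier G. lenw G S x \<le> n \<longrightarrow> lenw G S y \<le> n \<longrightarrow>
           N (idx n) #>\<^bsub>G\<^esub> x = N (idx n) #>\<^bsub>G\<^esub> y \<longrightarrow> x = y"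
    by metis
  interpret bx: boxsetup G S N M p f rho1 rho2 idx
    by (rule boxsetup.intro[OF assms(1)], unfold boxsetup_axioms_def) (use assms r fLp idx in auto)
  obtain e where act: "proper_affine_Lp_action G (wmeas M (bx.wt e)) p bx.act bx.bc"
    using bx.main_exists by blast
  show ?thesis
    by (intro exI, rule action_transfer[OF act inj_enc])
qed



end
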